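(* Let $\chi$ and $\widetilde\chi$ be two Hecke characters of infinity type $(-2,0)$ as in the context. Then the $\mathscr{O}_F$-submodules $\mathcal{L}_{\chi,\operatorname{Eis}}=\sum_{[\mathfrak{a}]\in\operatorname{Cl}(K)}\mathscr{O}_F\,E_{\chi,\mathfrak{a}}$ and $\mathcal{L}_{\widetilde\chi,\operatorname{Eis}}=\sum_{[\mathfrak{a}]\in\operatorname{Cl}(K)}\mathscr{O}_F\,E_{\widetilde\chi,\mathfrak{a}}$ coincide; i.e. $\mathcal{L}_{\operatorname{Eis}}$ does not depend on the choice of $\chi$.
   Context: $K\subset\mathbb{C}$ is imaginary quadratic, with ring of integers $\mathscr{O}$, $\mathscr{O}^\times=\{\pm1\}$, class number $h$, class group $\operatorname{Cl}(K)$, Hilbert class field $H$. A Hecke character of infinity type $(-2,0)$ is a homomorphism $\chi$ from fractional ideals of $K$ to $\mathbb{C}^\times$ with $\chi((\alpha))=\alpha^{-2}$ for $\alpha\in K^\times$. $F$ is a finite Galois extension of $H$ containing the values of $\chi$ (hence of every such character, since they differ by characters of $\operatorname{Cl}(K)$) and the $h$-th roots of unity. $\mathbb{H}_3=\{u=z+jv:z\in\mathbb{C},v>0\}$. With $\eta(u,c,d,s)=\dfrac{v^s[(\overline{cz+d})^2dz-(\bar cv)^2d\bar z+2(\overline{cz+d})\bar cv\,dv]}{(|cz+d|^2+|c|^2v^2)^{2+s}}$, $E_{\chi,\mathfrak{a}}$ is the value at $s=0$ of the analytic continuation of $\chi(\mathfrak{a})^{-1}\operatorname{N}(\mathfrak{a})^s\sum_{(c,d)\in\mathfrak{a}\times\mathfrak{a},\,(c)+(d)=\mathfrak{a}}\eta(u,c,d,s)$;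 it depends only on the class $[\mathfrak{a}]$. *)

theory Defs
  imports "HOL-Complex_Analysis.Complex_Analysis" "HOL-Computational_Algebra.Polynomial"
begin

definition alg_int :: "complex \<Rightarrow> bool" where
  "alg_int x \<longleftrightarrow> (\<exists>p :: int poly. lead_coeff p = 1 \<and> poly (map_poly of_int p) x = 0)"

definition ints_of :: "complex set \<Rightarrow> complex set" where
  "ints_of L = {x \<in> L. alg_int x}"

definition units_of_ring :: "complex set \<Rightarrow> complex set" where
  "units_of_ring R = {u \<in> R. \<exists>v \<in> R. u * v = 1}"

definition subfield :: "complex set \<Rightarrow> bool" where
  "subfield S \<longleftrightarrow> 0 \<in> S \<and> 1 \<in> S \<and> (\<forall>x\<in>S. \<forall>y\<in>S. x + y \<in> S \<and> x - y \<in> S \<and> x * y \<in> S)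
     \<and> (\<forall>x\<in>S. x \<noteq> 0 \<longrightarrow> inverse x \<in> S)"

definition imag_quadratic :: "complex set \<Rightarrow> bool" where
  "imag_quadratic K \<longleftrightarrow> (\<exists>D :: int. D < 0 \<and>
      K = {a + b * csqrt (of_int D) | a b. a \<in> \<rat> \<and> b \<in> \<rat>})"

definition O_submod :: "complex set \<Rightarrow> complex set \<Rightarrow> bool" where
  "O_submod K I \<longleftrightarrow> 0 \<in> I \<and> (\<forall>x\<in>I. \<forall>y\<in>I. x + y \<in> I) \<and> (\<forall>r\<in>ints_of K. \<forall>x\<in>I. r * x \<in> I)"

definition ideal_gen :: "complex set \<Rightarrow> complex set \<Rightarrow> complex set" where
  "ideal_gen K S = \<Inter>{I. S \<subseteq> I \<and> O_submod K I}"

definition frac_ideal :: "complex set \<Rightarrow> complex set \<Rightarrow> bool" where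
  "frac_ideal K a \<longleftrightarrow> a \<subseteq> K \<and> a \<noteq> {0} \<and> O_submod K a \<and>
      (\<exists>c \<in> ints_of K. c \<noteq> 0 \<and> (\<forall>x\<in>a. c * x \<in> ints_of K))"

definition ideal_mult :: "complex set \<Rightarrow> complex set \<Rightarrow> complex set \<Rightarrow> complex set" where
  "ideal_mult K a b = ideal_gen K {x * y | x y. x \<in> a \<and> y \<in> b}"

definition ideal_equiv :: "complex set \<Rightarrow> complex set \<Rightarrow> complex set \<Rightarrow> bool" where
  "ideal_equiv K a b \<longleftrightarrow> (\<exists>\<alpha>\<in>K. \<alpha> \<noteq> 0 \<and> b = (\<lambda>x. \<alpha> * x) ` a)"

definition class_group :: "complex set \<Rightarrow> complex set set set" where
  "class_group K = {{b. frac_ideal K b \<and> ideal_equiv K a b} | a. frac_ideal K a}"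

definition class_number :: "complex set \<Rightarrow> nat" where
  "class_number K = card (class_group K)"

definition ideal_norm :: "complex set \<Rightarrow> complex set \<Rightarrow> real" where
  "ideal_norm K a = (THE r. r > 0 \<and> ideal_mult K a (cnj ` a) = ideal_gen K {complex_of_real r})"

definition hecke_char_m2 :: "complex set \<Rightarrow> (complex set \<Rightarrow> complex) \<Rightarrow> bool" where
  "hecke_char_m2 K chi \<longleftrightarrow>
     (\<forall>a. frac_ideal K a \<longrightarrow> chi a \<noteq> 0) \<and>
     (\<forall>a b. frac_ideal K a \<longrightarrow> frac_ideal K b \<longrightarrow> chi (ideal_mult K a b) = chi a * chi b) \<and>
     (\<forall>\<alpha>\<in>K. \<alpha> \<noteq> 0 \<longrightarrow> chi (ideal_gen K {\<alpha>}) = inverse (\<alpha> ^ 2))"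

definition fin_ext :: "complex set \<Rightarrow> complex set \<Rightarrow> bool" where
  "fin_ext K L \<longleftrightarrow> subfield K \<and> subfield L \<and> K \<subseteq> L \<and>
     (\<exists>B. finite B \<and> B \<subseteq> L \<and> L = {(\<Sum>b\<in>B. f b * b) | f. \<forall>b\<in>B. f b \<in> K})"

definition auts :: "complex set \<Rightarrow> complex set \<Rightarrow> (complex \<Rightarrow> complex) set" where
  "auts K L = {\<sigma>. bij_betw \<sigma> L L \<and> (\<forall>x\<in>L. \<forall>y\<in>L. \<sigma> (x + y) = \<sigma> x + \<sigma> y \<and> \<sigma> (x * y) = \<sigma> x * \<sigma> y)
      \<and> (\<forall>x\<in>K. \<sigma> x = x) \<and> (\<forall>x. x \<notin> L \<longrightarrow> \<sigma> x = x)}"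

definition galois_ext :: "complex set \<Rightarrow> complex set \<Rightarrow> bool" where
  "galois_ext K L \<longleftrightarrow> fin_ext K L \<and> {x \<in> L. \<forall>\<sigma>\<in>auts K L. \<sigma> x = x} = K"

definition abelian_ext :: "complex set \<Rightarrow> complex set \<Rightarrow> bool" where
  "abelian_ext K L \<longleftrightarrow> galois_ext K L \<and> (\<forall>\<sigma>\<in>auts K L. \<forall>\<tau>\<in>auts K L. \<sigma> \<circ> \<tau> = \<tau> \<circ> \<sigma>)"

definition ring_ideal :: "complex set \<Rightarrow> complex set \<Rightarrow> bool" where
  "ring_ideal R I \<longleftrightarrow> I \<subseteq> R \<and> 0 \<in> I \<and> (\<forall>x\<in>I. \<forall>y\<in>I. x + y \<in> I) \<and> (\<forall>r\<in>R. \<forall>x\<in>I. r * x \<in> I)"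

definition ring_ideal_gen :: "complex set \<Rightarrow> complex set \<Rightarrow> complex set" where
  "ring_ideal_gen R S = \<Inter>{I. ring_ideal R I \<and> S \<subseteq> I}"

definition prime_ring_ideal :: "complex set \<Rightarrow> complex set \<Rightarrow> bool" where
  "prime_ring_ideal R P \<longleftrightarrow> ring_ideal R P \<and> P \<noteq> R \<and> P \<noteq> {0} \<and>
     (\<forall>x\<in>R. \<forall>y\<in>R. x * y \<in> P \<longrightarrow> x \<in> P \<or> y \<in> P)"

text \<open>L/K unramified (at all finite primes; K is imaginary so there is no ramification at
  infinity): every nonzero prime p of O_K generates a radical (= squarefree) ideal of O_L.\<close>
definition unramified_ext :: "complex set \<Rightarrow> complex set \<Rightarrow> bool" where
  "unramified_ext K L \<longleftrightarrow> (\<forall>P. prime_ring_ideal (ints_of K) P \<longrightarrow>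
      (let J = ring_ideal_gen (ints_of L) P in
        \<forall>x\<in>ints_of L. (\<exists>n. x ^ n \<in> J) \<longrightarrow> x \<in> J))"

definition hilbert_class_field :: "complex set \<Rightarrow> complex set \<Rightarrow> bool" where
  "hilbert_class_field K H \<longleftrightarrow> abelian_ext K H \<and> unramified_ext K H \<and>
     (\<forall>L. abelian_ext K L \<and> unramified_ext K L \<longrightarrow> L \<subseteq> H)"

text \<open>Value at s = 0 of the meromorphic continuation of s \<mapsto> sum over A of F s x
  (the series converging absolutely on a right half-plane). Holomorphy on the complement of a
  closed discrete set not containing 0 is required; 0 if no such continuation exists.\<close>
definition cont_at_0 :: "(complex \<Rightarrow> 'b \<Rightarrow> complex) \<Rightarrow> 'b set \<Rightarrow> complex" where
  "cont_at_0 F A =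
    (let P = (\<lambda>w. \<exists>g S \<sigma>. \<not> (\<exists>z. z islimpt S) \<and> 0 \<notin> S \<and> g holomorphic_on (- S) \<and>
                 (\<forall>s. Re s > \<sigma> \<longrightarrow> s \<notin> S \<and> F s summable_on A \<and> g s = infsum (F s) A) \<and> g 0 = w)
     in if \<exists>w. P w then (THE w. P w) else 0)"

text \<open>Coefficients of eta(u,c,d,s) with respect to dz (k=0), d zbar (k=1), dv (k=2), u = z + jv.\<close>
definition eta :: "complex \<Rightarrow> real \<Rightarrow> complex \<Rightarrow> complex \<Rightarrow> complex \<Rightarrow> nat \<Rightarrow> complex" where
  "eta z v c d s k =
    (complex_of_real v powr s *
      (if k = 0 then (cnj (c * z + d))\<^sup>2
       else if k = 1 then - (cnj c * complex_of_real v)\<^sup>2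
       else if k = 2 then 2 * cnj (c * z + d) * cnj c * complex_of_real v
       else 0))
    / complex_of_real ((cmod (c * z + d))\<^sup>2 + (cmod c)\<^sup>2 * v\<^sup>2) powr (2 + s)"

definition coprime_pairs :: "complex set \<Rightarrow> complex set \<Rightarrow> (complex \<times> complex) set" where
  "coprime_pairs K a = {(c, d). c \<in> a \<and> d \<in> a \<and> ideal_gen K {c, d} = a}"

text \<open>E_{chi,a} as a 1-form on H_3: (z, v) with v > 0, coefficient index k.\<close>
definition E_form :: "complex set \<Rightarrow> (complex set \<Rightarrow> complex) \<Rightarrow> complex set
                      \<Rightarrow> complex \<Rightarrow> real \<Rightarrow> nat \<Rightarrow> complex" where
  "E_form K chi a z v k =
    (if v > 0 then
       cont_at_0 (\<lambda>s (c, d). inverse (chi a) * complex_of_real (ideal_norm K a) powr s * eta z v c d s k)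
                 (coprime_pairs K a)
     else 0)"

definition L_Eis :: "complex set \<Rightarrow> complex set \<Rightarrow> (complex set \<Rightarrow> complex)
                    \<Rightarrow> (complex \<Rightarrow> real \<Rightarrow> nat \<Rightarrow> complex) set" where
  "L_Eis K F chi = {(\<lambda>z v k. \<Sum>a\<in>A. r a * E_form K chi a z v k) | A r.
      finite A \<and> (\<forall>a\<in>A. frac_ideal K a) \<and> (\<forall>a\<in>A. r a \<in> ints_of F)}"

end

theory Submission
  imports Defs "Jordan_Normal_Form.Char_Poly"
begin

lemma alg_int_module:
  fixes x :: "nat \<Rightarrow> complex" and M :: "nat \<Rightarrow> nat \<Rightarrow> int" and y :: complex
  assumes eq: "\<And>i. i < m \<Longrightarrow> y * x i = (\<Sum>j<m. of_int (M i j) * x j)"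
    and nz: "kz < m" "x kz \<noteq> 0"
  shows "alg_int y"
proof -
  define B :: "int mat" where "B = mat m m (\<lambda>(i,j). M i j)"
  define A :: "complex mat" where "A = map_mat of_int B"
  define v where "v = vec m x"
  have B: "B \<in> carrier_mat m m" by (simp add: B_def)
  have A: "A \<in> carrier_mat m m" by (simp add: A_def B_def)
  have Av: "A *\<^sub>v v = y \<cdot>\<^sub>v v"
  proof (rule eq_vecI)
    fix i assume i: "i < dim_vec (y \<cdot>\<^sub>v v)"
    then have im: "i < m" by (simp add: v_def)
    have "(A *\<^sub>v v) $ i = (\<Sum>j<m. of_int (M i j) * x j)"
      using im by (simp add: A_def B_def v_def mult_mat_vec_def scalar_prod_def atLeast0LessThan)
    also have "\<dots> = (y \<cdot>\<^sub>v v) $ i" using eq[OF im] im by (simp add: v_def)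
    finally show "(A *\<^sub>v v) $ i = (y \<cdot>\<^sub>v v) $ i" .
  qed (simp add: A_def B_def v_def)
  have "v \<noteq> 0\<^sub>v m"
  proof
    assume "v = 0\<^sub>v m"
    then have "v $ kz = 0" using nz by simp
    then show False using nz by (simp add: v_def)
  qed
  then have "eigenvector A v y" using Av A by (simp add: eigenvector_def v_def)
  then have "eigenvalue A y" by (auto simp: eigenvalue_def)
  then have "poly (char_poly A) y = 0" using eigenvalue_root_char_poly[OF A] by simp
  moreover have "char_poly A = map_poly of_int (char_poly B)"
    unfolding A_def by (rule of_int_hom.char_poly_hom[OF B])
  moreover have "lead_coeff (char_poly B) = 1"
    using degree_monic_char_poly[OF B] by simp
  ultimately show ?thesis unfolding alg_int_def by metis
qed

lemma alg_int_rel: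
  fixes x :: complex and c :: "nat \<Rightarrow> int"
  assumes n: "n \<ge> 1" and rel: "x ^ n = (\<Sum>l<n. of_int (c l) * x ^ l)"
  shows "alg_int x"
proof (rule alg_int_module[where x = "\<lambda>l. x ^ l" and m = n and kz = 0])
  show "0 < n" using n by simp
  show "x ^ 0 \<noteq> 0" by simp
  fix i assume i: "i < n"
  show "x * x ^ i = (\<Sum>j<n. of_int (if i + 1 < n then (if j = i + 1 then 1 else 0) else c j) * x ^ j)"
  proof (cases "i + 1 < n")
    case True
    have "(\<Sum>j<n. of_int (if i + 1 < n then (if j = i + 1 then 1 else 0) else c j) * x ^ j)
        = (\<Sum>j<n. (if j = i + 1 then x ^ j else 0))"
      using True by (intro sum.cong) auto
    also have "\<dots> = x ^ (i+1)" using True by (simp add: sum.delta)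
    finally show ?thesis by simp
  next
    case False
    then have "i + 1 = n" using i by simp
    then have "x * x ^ i = x ^ n" by auto
    then show ?thesis using rel False by simp
  qed
qed

lemma alg_int_relD:
  assumes "alg_int x"
  shows "\<exists>n c. n \<ge> 1 \<and> x ^ n = (\<Sum>l<n. of_int (c l) * x ^ l)"
proof -
  obtain p :: "int poly" where p1: "lead_coeff p = 1" and p0: "poly (map_poly of_int p) x = 0"
    using assms unfolding alg_int_def by blast
  define n where "n = degree p"
  have dm: "degree (map_poly (of_int :: int \<Rightarrow> complex) p) = n"
    unfolding n_def by (rule degree_map_poly) simp
  have cm: "coeff (map_poly (of_int :: int \<Rightarrow> complex) p) i = of_int (coeff p i)" for i
    by (rule coeff_map_poly) simp
  have "0 = (\<Sum>i\<le>n. of_int (coeff p i) * x ^ i)"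
    using p0 unfolding poly_altdef dm cm by simp
  also have "\<dots> = (\<Sum>i<n. of_int (coeff p i) * x ^ i) + of_int (coeff p n) * x ^ n"
  proof -
    have "{..n} = insert n {..<n}" by auto
    then show ?thesis by (simp add: add.commute)
  qed
  finally have e00: "0 = (\<Sum>i<n. of_int (coeff p i) * x ^ i) + of_int (coeff p n) * x ^ n" .
  have c1: "coeff p n = 1" using p1 by (simp add: n_def)
  have e0: "(\<Sum>i<n. of_int (coeff p i) * x ^ i) + x ^ n = 0" using e00 c1 by simp
  then have "x ^ n = - (\<Sum>i<n. of_int (coeff p i) * x ^ i)" by (simp add: add_eq_0_iff)
  also have "\<dots> = (\<Sum>i<n. of_int (- coeff p i) * x ^ i)" by (simp add: sum_negf)
  finally have e: "x ^ n = (\<Sum>i<n. of_int (- coeff p i) * x ^ i)" .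
  have "n \<ge> 1"
  proof (rule ccontr)
    assume "\<not> n \<ge> 1"
    then have "n = 0" by simp
    then show False using e by simp
  qed
  then show ?thesis using e by (intro exI[of _ n] exI[of _ "\<lambda>i. - coeff p i"] conjI)
qed

definition zcomb :: "(nat \<Rightarrow> complex) \<Rightarrow> nat \<Rightarrow> complex set" where
  "zcomb e N = {z. \<exists>c :: nat \<Rightarrow> int. z = (\<Sum>j<N. of_int (c j) * e j)}"

lemma zcomb_0: "0 \<in> zcomb e N"
  unfolding zcomb_def by (rule CollectI, rule exI[of _ "\<lambda>_. 0"]) simp

lemma zcomb_add: 
  assumes "a \<in> zcomb e N" "b \<in> zcomb e N" shows "a + b \<in> zcomb e N"
proof -
  obtain c where c: "a = (\<Sum>j<N. of_int (c j) * e j)" using assms(1) unfolding zcomb_def by blast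
  obtain d where d: "b = (\<Sum>j<N. of_int (d j) * e j)" using assms(2) unfolding zcomb_def by blast
  have "a + b = (\<Sum>j<N. of_int (c j + d j) * e j)"
    unfolding c d by (simp add: sum.distrib[symmetric] algebra_simps)
  then show ?thesis unfolding zcomb_def by (intro CollectI exI[of _ "\<lambda>j. c j + d j"])
qed

lemma zcomb_smult:
  assumes "a \<in> zcomb e N" shows "of_int k * a \<in> zcomb e N"
proof -
  obtain c where c: "a = (\<Sum>j<N. of_int (c j) * e j)" using assms(1) unfolding zcomb_def by blast
  have "of_int k * a = (\<Sum>j<N. of_int (k * c j) * e j)"
    unfolding c by (simp add: sum_distrib_left algebra_simps)
  then show ?thesis unfolding zcomb_def by (intro CollectI exI[of _ "\<lambda>j. k * c j"])
qed

lemma zcomb_gen: 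
  assumes "j < N" shows "e j \<in> zcomb e N"
proof -
  have "(\<Sum>i<N. of_int (if i = j then 1 else 0) * e i) = (\<Sum>i<N. if i = j then e i else 0)"
    by (intro sum.cong) auto
  also have "\<dots> = e j" using assms by (simp add: sum.delta)
  finally show ?thesis unfolding zcomb_def by (intro CollectI exI[of _ "\<lambda>i. if i = j then 1 else 0"]) simp
qed

lemma zcomb_sum: "finite L \<Longrightarrow> (\<And>l. l \<in> L \<Longrightarrow> f l \<in> zcomb e N) \<Longrightarrow> sum f L \<in> zcomb e N"
  by (induction L rule: finite_induct) (auto intro: zcomb_0 zcomb_add)

lemma zcomb_module:
  assumes "\<And>i. i < N \<Longrightarrow> z * e i \<in> zcomb e N" "kz < N" "e kz \<noteq> 0"
  shows "alg_int z"
proof -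
  have "\<forall>i. \<exists>c. i < N \<longrightarrow> z * e i = (\<Sum>j<N. of_int (c j) * e j)"
    using assms(1) unfolding zcomb_def by blast
  then obtain M where M0: "\<forall>i. i < N \<longrightarrow> z * e i = (\<Sum>j<N. of_int (M i j) * e j)"
    using choice[OF \<open>\<forall>i. \<exists>c. _\<close>] by blast
  then have M: "\<And>i. i < N \<Longrightarrow> z * e i = (\<Sum>j<N. of_int (M i j) * e j)" by blast
  show ?thesis by (rule alg_int_module[OF M assms(2,3)])
qed

lemma pow_in_zcomb:
  assumes n: "n \<ge> 1" and rel: "x ^ n = (\<Sum>l<n. of_int (c l) * x ^ l)"
  shows "x ^ i \<in> zcomb (\<lambda>l. x ^ l) n"
proof (induction i rule: less_induct)
  case (less i)
  show ?case
  proof (cases "i < n")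
    case True then show ?thesis by (rule zcomb_gen)
  next
    case False
    then have "x ^ i = x ^ (i - n) * x ^ n" by (simp add: power_add[symmetric])
    also have "\<dots> = (\<Sum>l<n. of_int (c l) * x ^ (i - n + l))"
      unfolding rel by (simp add: sum_distrib_left power_add algebra_simps)
    finally have eq: "x ^ i = \<dots>" .
    have "(\<Sum>l<n. of_int (c l) * x ^ (i - n + l)) \<in> zcomb (\<lambda>l. x ^ l) n"
    proof (rule zcomb_sum)
      fix l assume "l \<in> {..<n}"
      then have "i - n + l < i" using False n by auto
      then show "of_int (c l) * x ^ (i - n + l) \<in> zcomb (\<lambda>l. x ^ l) n"
        by (intro zcomb_smult less.IH)
    qed simp
    then show ?thesis using eq by simp
  qed
qed

lemma zcomb_mono_prod:
  assumes a: "a \<in> zcomb f n" and b: "b \<in> zcomb g m"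
    and fg: "\<And>i j. i < n \<Longrightarrow> j < m \<Longrightarrow> f i * g j \<in> zcomb e N"
  shows "a * b \<in> zcomb e N"
proof -
  obtain c where c: "a = (\<Sum>i<n. of_int (c i) * f i)" using a unfolding zcomb_def by blast
  obtain d where d: "b = (\<Sum>j<m. of_int (d j) * g j)" using b unfolding zcomb_def by blast
  have "a * b = (\<Sum>i<n. \<Sum>j<m. of_int (c i * d j) * (f i * g j))"
    unfolding c d sum_product by (intro sum.cong refl) (simp add: mult_ac)
  also have "\<dots> \<in> zcomb e N"
    by (intro zcomb_sum zcomb_smult fg) auto
  finally show ?thesis .
qed

lemma alg_int_closed:
  assumes x: "alg_int x" and y: "alg_int y"
  shows "alg_int (x + y)" "alg_int (x * y)"
proof -
  obtain n c where n: "n \<ge> 1" and cx: "x ^ n = (\<Sum>l<n. of_int (c l) * x ^ l)"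
    using alg_int_relD[OF x] by blast
  obtain m d where m: "m \<ge> 1" and dy: "y ^ m = (\<Sum>l<m. of_int (d l) * y ^ l)"
    using alg_int_relD[OF y] by blast
  define e where "e k = x ^ (k div m) * y ^ (k mod m)" for k
  have gen: "x ^ i * y ^ j \<in> zcomb e (n * m)" for i j
  proof (rule zcomb_mono_prod[OF pow_in_zcomb[OF n cx] pow_in_zcomb[OF m dy]])
    fix i j assume i: "i < n" and j: "j < m"
    have "i * m + j < n * m"
    proof -
      have "i * m + j < i * m + m" using j by simp
      also have "\<dots> = (i + 1) * m" by simp
      also have "\<dots> \<le> n * m" using i by (intro mult_right_mono) auto
      finally show ?thesis .
    qed
    moreover have "e (i * m + j) = x ^ i * y ^ j" using j m unfolding e_def by simp
    ultimately show "x ^ i * y ^ j \<in> zcomb e (n * m)" by (metis zcomb_gen)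
  qed
  have nz: "0 < n * m" "e 0 \<noteq> 0" using n m by (auto simp: e_def)
  show "alg_int (x + y)"
  proof (rule zcomb_module[where N="n*m" and e=e and kz=0])
    fix k
    have eq: "(x + y) * e k = x ^ (Suc (k div m)) * y ^ (k mod m) + x ^ (k div m) * y ^ (Suc (k mod m))"
      by (simp add: e_def algebra_simps)
    show "(x + y) * e k \<in> zcomb e (n * m)"
      unfolding eq by (rule zcomb_add[OF gen gen])
  qed (use nz in auto)
  show "alg_int (x * y)"
  proof (rule zcomb_module[where N="n*m" and e=e and kz=0])
    fix k
    have eq: "(x * y) * e k = x ^ (Suc (k div m)) * y ^ (Suc (k mod m))"
      by (simp add: e_def algebra_simps)
    show "(x * y) * e k \<in> zcomb e (n * m)"
      unfolding eq by (rule gen)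
  qed (use nz in auto)
qed

lemma alg_int_of_int: "alg_int (of_int k)"
  by (rule alg_int_rel[where n = 1 and c = "\<lambda>_. k"]) auto

lemma alg_int_neg: "alg_int x \<Longrightarrow> alg_int (- x)"
  using alg_int_closed(2)[OF alg_int_of_int[of "-1"]] by simp

lemma alg_int_cnj:
  assumes "alg_int x" shows "alg_int (cnj x)"
proof -
  obtain n c where n: "n \<ge> 1" and cx: "x ^ n = (\<Sum>l<n. of_int (c l) * x ^ l)"
    using alg_int_relD[OF assms] by blast
  have "cnj x ^ n = (\<Sum>l<n. of_int (c l) * cnj x ^ l)"
    using arg_cong[OF cx, of cnj] by (simp add: cnj_sum)
  then show ?thesis by (rule alg_int_rel[OF n])
qed

lemma alg_int_root_unity:
  assumes w: "w ^ h = 1" and h: "h \<ge> 1" shows "alg_int w"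
proof (rule alg_int_rel[where n = h and c = "\<lambda>l. if l = 0 then 1 else 0"])
  have "(\<Sum>l<h. of_int (if l = 0 then 1 else 0) * w ^ l) = (\<Sum>l<h. if l = 0 then w ^ l else 0)"
    by (intro sum.cong) auto
  also have "\<dots> = 1" using h by (simp add: sum.delta)
  finally show "w ^ h = (\<Sum>l<h. of_int (if l = 0 then 1 else 0) * w ^ l)" using w by simp
qed (use h in auto)

lemma alg_int_quadratic:
  assumes z: "z ^ 2 = of_int T * z - of_int N"
  shows "alg_int z"
proof (rule alg_int_rel[where n = 2 and c = "\<lambda>l. if l = 0 then - N else T"])
  have "(\<Sum>l<2. of_int (if l = 0 then - N else T) * z ^ l) = of_int (-N) * z ^ 0 + of_int T * z ^ 1"
    by (simp add: numeral_2_eq_2)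
  then show "z ^ 2 = (\<Sum>l<2::nat. of_int (if l = 0 then - N else T) * z ^ l)" using z by simp
qed auto

lemma alg_int_Rats_Ints:
  assumes x: "alg_int x" and xq: "x \<in> \<rat>"
  shows "x \<in> \<int>"
proof -
  obtain n c where n: "n \<ge> 1" and cx: "x ^ n = (\<Sum>l<n. of_int (c l) * x ^ l)"
    using alg_int_relD[OF x] by blast
  obtain r where r: "x = of_rat r" using xq by (auto simp: Rats_def)
  obtain u v where uv: "quotient_of r = (u, v)" by (cases "quotient_of r") auto
  have v0: "v > 0" using quotient_of_denom_pos[OF uv] .
  have cop: "coprime u v" using quotient_of_coprime[OF uv] .
  have rq: "r = of_int u / of_int v" using quotient_of_div[OF uv] .
  have xv: "x * of_int v = of_int u" using v0 unfolding r rq by (simp add: of_rat_divide)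
  have "of_int u ^ n = (x * of_int v) ^ n" using xv by simp
  also have "\<dots> = x ^ n * of_int v ^ n" by (simp only: power_mult_distrib)
  also have "\<dots> = (\<Sum>l<n. of_int (c l) * (x ^ l * of_int v ^ n))"
    unfolding cx by (simp add: sum_distrib_left sum_distrib_right mult_ac)
  also have "\<dots> = (\<Sum>l<n. of_int (c l) * (of_int u ^ l * of_int v ^ (n - l)))"
  proof (intro sum.cong refl)
    fix l assume "l \<in> {..<n}"
    then have nl: "n = l + (n - l)" by simp
    have "x ^ l * of_int v ^ n = x ^ l * (of_int v ^ l * of_int v ^ (n - l))"
      by (subst nl) (simp only: power_add)
    also have "\<dots> = (x * of_int v) ^ l * of_int v ^ (n - l)"
      by (simp only: power_mult_distrib mult.assoc)
    finally have "x ^ l * of_int v ^ n = (x * of_int v) ^ l * of_int v ^ (n - l)" .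
    then show "of_int (c l) * (x ^ l * of_int v ^ n) = of_int (c l) * (of_int u ^ l * of_int v ^ (n - l))"
      using xv by simp
  qed
  finally have "(of_int (u ^ n) :: complex) = of_int (\<Sum>l<n. c l * (u ^ l * v ^ (n - l)))"
    by simp
  then have ueq: "u ^ n = (\<Sum>l<n. c l * (u ^ l * v ^ (n - l)))" by (simp only: of_int_eq_iff)
  have "v dvd (\<Sum>l<n. c l * (u ^ l * v ^ (n - l)))"
  proof (rule dvd_sum)
    fix l assume "l \<in> {..<n}"
    then have "v dvd v ^ (n - l)" by (intro dvd_power) auto
    then show "v dvd c l * (u ^ l * v ^ (n - l))" by (simp add: dvd_mult)
  qed
  then have "v dvd u ^ n" using ueq by simp
  moreover have "coprime (u ^ n) v" using cop by simp
  ultimately have "is_unit v" using coprime_common_divisor[of "u ^ n" v v] by simp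
  then have "v = 1" using v0 by simp
  then have "x = of_int u" using xv by simp
  then show ?thesis by simp
qed

lemma Rats_denom:
  assumes "(q :: complex) \<in> \<rat>" shows "\<exists>d :: int. d > 0 \<and> of_int d * q \<in> \<int>"
proof -
  obtain r where r: "q = of_rat r" using assms by (auto simp: Rats_def)
  obtain u v where uv: "quotient_of r = (u, v)" by (cases "quotient_of r") auto
  have v0: "v > 0" using quotient_of_denom_pos[OF uv] .
  have rq: "r = of_int u / of_int v" using quotient_of_div[OF uv] .
  have "of_int v * q = of_int u" using v0 unfolding r rq by (simp add: of_rat_divide)
  then show ?thesis using v0 by (intro exI[of _ v]) simp
qed

lemma cnj_of_rat: "cnj (of_rat r) = of_rat r"
proof -
  obtain u v where uv: "quotient_of r = (u, v)" by (cases "quotient_of r") auto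
  have rq: "r = of_int u / of_int v" using quotient_of_div[OF uv] .
  show ?thesis unfolding rq by (simp add: of_rat_divide)
qed

lemma Rats_real_cnj: "(q :: complex) \<in> \<rat> \<Longrightarrow> cnj q = q"
  by (auto simp: Rats_def cnj_of_rat)

locale iq =
  fixes K :: "complex set" and D :: int
  assumes D_neg: "D < 0"
    and K_eq: "K = {a + b * csqrt (of_int D) | a b. a \<in> \<rat> \<and> b \<in> \<rat>}"
begin

definition w :: complex where "w = csqrt (of_int D)"

lemma w_sq: "w * w = of_int D"
  unfolding w_def using power2_csqrt[of "of_int D"] by (simp add: power2_eq_square)

lemma cnj_w: "cnj w = - w"
proof -
  have "w = \<i> * of_real (sqrt \<bar>of_int D\<bar>)"
    unfolding w_def using D_neg by (subst csqrt_of_real_nonpos) auto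
  then show ?thesis by simp
qed

lemma K_iff: "x \<in> K \<longleftrightarrow> (\<exists>a b. a \<in> \<rat> \<and> b \<in> \<rat> \<and> x = a + b * w)"
  unfolding K_eq w_def by blast

lemma K_memI: "a \<in> \<rat> \<Longrightarrow> b \<in> \<rat> \<Longrightarrow> a + b * w \<in> K"
  unfolding K_iff by blast

lemma K_memE:
  assumes "x \<in> K" obtains a b where "a \<in> \<rat>" "b \<in> \<rat>" "x = a + b * w"
  using assms unfolding K_iff by blast

lemma Rats_K: "q \<in> \<rat> \<Longrightarrow> q \<in> K"
  using K_memI[of q 0] by simp

lemma K_add: assumes "x \<in> K" "y \<in> K" shows "x + y \<in> K"
proof -
  obtain a b where ab: "a \<in> \<rat>" "b \<in> \<rat>" "x = a + b * w" using K_memE[OF assms(1)] by blast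
  obtain c d where cd: "c \<in> \<rat>" "d \<in> \<rat>" "y = c + d * w" using K_memE[OF assms(2)] by blast
  have e: "x + y = (a + c) + (b + d) * w" using ab cd by (simp add: algebra_simps)
  show ?thesis unfolding e using ab cd by (intro K_memI Rats_add)
qed

lemma K_mult: assumes "x \<in> K" "y \<in> K" shows "x * y \<in> K"
proof -
  obtain a b where ab: "a \<in> \<rat>" "b \<in> \<rat>" "x = a + b * w" using K_memE[OF assms(1)] by blast
  obtain c d where cd: "c \<in> \<rat>" "d \<in> \<rat>" "y = c + d * w" using K_memE[OF assms(2)] by blast
  have "x * y = (a * c + b * d * (w * w)) + (a * d + b * c) * w" using ab cd by (simp add: algebra_simps)
  also have "\<dots> = (a * c + b * d * of_int D) + (a * d + b * c) * w" by (simp add: w_sq)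
  finally have e: "x * y = (a * c + b * d * of_int D) + (a * d + b * c) * w" .
  show ?thesis unfolding e using ab cd by (intro K_memI Rats_add Rats_mult Rats_of_int)
qed

lemma K_uminus: assumes "x \<in> K" shows "- x \<in> K"
  using K_mult[OF Rats_K[of "-1"] assms] by simp

lemma K_diff: assumes "x \<in> K" "y \<in> K" shows "x - y \<in> K"
  using K_add[OF assms(1) K_uminus[OF assms(2)]] by simp

lemma K_cnj_eq: assumes "a \<in> \<rat>" "b \<in> \<rat>" shows "cnj (a + b * w) = a - b * w"
  using assms by (simp add: Rats_real_cnj cnj_w)

lemma K_cnj: assumes "x \<in> K" shows "cnj x \<in> K"
proof -
  obtain a b where ab: "a \<in> \<rat>" "b \<in> \<rat>" "x = a + b * w" using K_memE[OF assms(1)] by blast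
  then have e: "cnj x = a + (- b) * w" using K_cnj_eq by simp
  show ?thesis unfolding e using ab by (intro K_memI) auto
qed

lemma K_nrm: assumes "x \<in> K" shows "x * cnj x \<in> \<rat>"
proof -
  obtain a b where ab: "a \<in> \<rat>" "b \<in> \<rat>" "x = a + b * w" using K_memE[OF assms(1)] by blast
  have "cnj x = a - b * w" using ab(3) K_cnj_eq[OF ab(1,2)] by simp
  then have "x * cnj x = (a + b * w) * (a - b * w)" using ab(3) by simp
  also have "\<dots> = a * a - b * b * (w * w)" by (simp add: algebra_simps)
  also have "\<dots> = a * a - b * b * of_int D" by (simp add: w_sq)
  finally show ?thesis using ab by simp
qed

lemma K_tr: assumes "x \<in> K" shows "x + cnj x \<in> \<rat>"
proof -
  obtain a b where ab: "a \<in> \<rat>" "b \<in> \<rat>" "x = a + b * w" using K_memE[OF assms(1)] by blast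
  have "cnj x = a - b * w" using ab(3) K_cnj_eq[OF ab(1,2)] by simp
  then have e: "x + cnj x = a + a" using ab(3) by simp
  show ?thesis unfolding e by (intro Rats_add ab(1))
qed

lemma K_inverse: assumes "x \<in> K" shows "inverse x \<in> K"
proof (cases "x = 0")
  case True then show ?thesis using Rats_K[of 0] by simp
next
  case False
  have eq: "inverse x = cnj x * inverse (x * cnj x)" using False by (simp add: field_simps)
  moreover have "inverse (x * cnj x) \<in> K"
  proof -
    have "x * cnj x \<in> \<rat>" by (rule K_nrm[OF assms])
    then have "inverse (x * cnj x) \<in> \<rat>" by (rule Rats_inverse)
    then show ?thesis by (rule Rats_K)
  qed
  then show ?thesis unfolding eq by (intro K_mult K_cnj assms)
qed

lemma K_countable: "countable K"
proof -
  have "K = (\<lambda>(a, b). a + b * w) ` (\<rat> \<times> \<rat>)"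
  proof (intro equalityI subsetI)
    fix x assume "x \<in> K"
    then obtain a b where "a \<in> \<rat>" "b \<in> \<rat>" "x = a + b * w" by (rule K_memE)
    then show "x \<in> (\<lambda>(a, b). a + b * w) ` (\<rat> \<times> \<rat>)" by force
  next
    fix x assume "x \<in> (\<lambda>(a, b). a + b * w) ` (\<rat> \<times> \<rat>)"
    then show "x \<in> K" using K_memI by force
  qed
  moreover have "countable (\<rat> :: complex set)" unfolding Rats_def by simp
  ultimately show ?thesis by simp
qed

abbreviation OK where "OK \<equiv> ints_of K"

lemma O_iff: "x \<in> OK \<longleftrightarrow> x \<in> K \<and> alg_int x" unfolding ints_of_def by simp

lemma O_K: "x \<in> OK \<Longrightarrow> x \<in> K" unfolding O_iff by simp

lemma O_add: "x \<in> OK \<Longrightarrow> y \<in> OK \<Longrightarrow> x + y \<in> OK"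
  unfolding O_iff using K_add alg_int_closed by blast

lemma O_mult: "x \<in> OK \<Longrightarrow> y \<in> OK \<Longrightarrow> x * y \<in> OK"
  unfolding O_iff using K_mult alg_int_closed by blast

lemma O_int: "of_int k \<in> OK"
  unfolding O_iff using alg_int_of_int[of k] Rats_K[of "of_int k"] by simp

lemma O_1: "1 \<in> OK" using O_int[of 1] by simp
lemma O_0: "0 \<in> OK" using O_int[of 0] by simp

lemma O_uminus: "x \<in> OK \<Longrightarrow> - x \<in> OK"
  using O_mult[OF O_int[of "-1"]] by simp

lemma O_cnj: "x \<in> OK \<Longrightarrow> cnj x \<in> OK"
  unfolding O_iff using K_cnj alg_int_cnj by simp

lemma O_nrm: assumes "x \<in> OK" shows "x * cnj x \<in> \<int>"
proof (rule alg_int_Rats_Ints)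
  show "alg_int (x * cnj x)" using O_mult[OF assms O_cnj[OF assms]] unfolding O_iff by (rule conjunct2)
  show "x * cnj x \<in> \<rat>" using assms O_K by (intro K_nrm)
qed

lemma O_tr: assumes "x \<in> OK" shows "x + cnj x \<in> \<int>"
proof (rule alg_int_Rats_Ints)
  show "alg_int (x + cnj x)" using O_add[OF assms O_cnj[OF assms]] unfolding O_iff by (rule conjunct2)
  show "x + cnj x \<in> \<rat>" using assms O_K by (intro K_tr)
qed

lemma O_intro:
  assumes x: "x \<in> K" and t: "x + cnj x \<in> \<int>" and n: "x * cnj x \<in> \<int>"
  shows "x \<in> OK"
proof -
  obtain T where T: "x + cnj x = of_int T" using t by (auto elim: Ints_cases)
  obtain N where N: "x * cnj x = of_int N" using n by (auto elim: Ints_cases)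
  have "x ^ 2 = (x + cnj x) * x - x * cnj x" by (simp add: algebra_simps power2_eq_square)
  then have "x ^ 2 = of_int T * x - of_int N" using T N by simp
  then have "alg_int x" by (rule alg_int_quadratic)
  then show ?thesis using x O_iff by simp
qed

lemma K_denom:
  assumes x: "x \<in> K" shows "\<exists>d :: int. d > 0 \<and> of_int d * x \<in> OK"
proof -
  obtain d1 :: int where d1: "d1 > 0" "of_int d1 * (x + cnj x) \<in> \<int>"
    using Rats_denom[OF K_tr[OF x]] by blast
  obtain d2 :: int where d2: "d2 > 0" "of_int d2 * (x * cnj x) \<in> \<int>"
    using Rats_denom[OF K_nrm[OF x]] by blast
  define d where "d = d1 * d2"
  define y where "y = of_int d * x"
  have "y + cnj y = of_int d2 * (of_int d1 * (x + cnj x))"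
    by (simp add: y_def d_def algebra_simps)
  then have t: "y + cnj y \<in> \<int>" using d2 d1 by (simp add: Ints_mult)
  have "y * cnj y = (of_int (d1 * d1 * d2) :: complex) * (of_int d2 * (x * cnj x))"
    by (simp add: y_def d_def algebra_simps)
  then have n: "y * cnj y \<in> \<int>" using d2 by (simp add: Ints_mult)
  have "y \<in> K" unfolding y_def by (intro K_mult Rats_K x) simp
  then have "y \<in> OK" using O_intro t n by blast
  moreover have "d > 0" using d1 d2 by (simp add: d_def)
  ultimately show ?thesis unfolding y_def by blast
qed

end

context iq
begin

lemma submod_0: "O_submod K I \<Longrightarrow> 0 \<in> I" unfolding O_submod_def by blast
lemma submod_add: "O_submod K I \<Longrightarrow> x \<in> I \<Longrightarrow> y \<in> I \<Longrightarrow> x + y \<in> I" unfolding O_submod_def by blast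
lemma submod_smult: "O_submod K I \<Longrightarrow> r \<in> OK \<Longrightarrow> x \<in> I \<Longrightarrow> r * x \<in> I" unfolding O_submod_def by blast
lemma submod_uminus: "O_submod K I \<Longrightarrow> x \<in> I \<Longrightarrow> - x \<in> I"
  using submod_smult[OF _ O_int[of "-1"]] by fastforce
lemma submod_int: "O_submod K I \<Longrightarrow> x \<in> I \<Longrightarrow> of_int k * x \<in> I"
  using submod_smult[OF _ O_int[of k]] by fastforce
lemma submod_diff: "O_submod K I \<Longrightarrow> x \<in> I \<Longrightarrow> y \<in> I \<Longrightarrow> x - y \<in> I"
  using submod_add[of I x "- y"] submod_uminus[of I y] by simp

lemma submodI:
  assumes "0 \<in> I" "\<And>x y. x \<in> I \<Longrightarrow> y \<in> I \<Longrightarrow> x + y \<in> I" "\<And>r x. r \<in> OK \<Longrightarrow> x \<in> I \<Longrightarrow> r * x \<in> I"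
  shows "O_submod K I"
  using assms unfolding O_submod_def by blast

lemma gen_submod: "O_submod K (ideal_gen K S)"
  unfolding ideal_gen_def O_submod_def by blast

lemma gen_sub: "S \<subseteq> ideal_gen K S"
  unfolding ideal_gen_def by blast

lemma gen_least: "O_submod K I \<Longrightarrow> S \<subseteq> I \<Longrightarrow> ideal_gen K S \<subseteq> I"
  unfolding ideal_gen_def by blast

lemma gen_mono: "S \<subseteq> T \<Longrightarrow> ideal_gen K S \<subseteq> ideal_gen K T"
  by (meson gen_least gen_sub gen_submod order_trans)

lemma scale_submod: "O_submod K a \<Longrightarrow> O_submod K ((\<lambda>x. \<alpha> * x) ` a)"
proof (rule submodI)
  assume a: "O_submod K a"
  show "0 \<in> (\<lambda>x. \<alpha> * x) ` a" using submod_0[OF a] by (intro image_eqI[of _ _ 0]) auto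
  fix x y assume "x \<in> (\<lambda>x. \<alpha> * x) ` a" "y \<in> (\<lambda>x. \<alpha> * x) ` a"
  then obtain x' y' where "x' \<in> a" "y' \<in> a" "x = \<alpha> * x'" "y = \<alpha> * y'" by blast
  then show "x + y \<in> (\<lambda>x. \<alpha> * x) ` a"
    using submod_add[OF a] by (intro image_eqI[of _ _ "x' + y'"]) (auto simp: algebra_simps)
next
  assume a: "O_submod K a"
  fix r x assume r: "r \<in> OK" and "x \<in> (\<lambda>x. \<alpha> * x) ` a"
  then obtain x' where x': "x' \<in> a" "x = \<alpha> * x'" by blast
  have 1: "r * x' \<in> a" by (rule submod_smult[OF a r x'(1)])
  have 2: "r * x = \<alpha> * (r * x')" using x'(2) by (simp add: mult.left_commute)
  show "r * x \<in> (\<lambda>x. \<alpha> * x) ` a" unfolding 2 using 1 by (rule imageI)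
qed

lemma OK_submod: "O_submod K OK"
  by (rule submodI) (auto intro: O_0 O_add O_mult)

lemma gen_single: "ideal_gen K {\<alpha>} = (\<lambda>x. \<alpha> * x) ` OK"
proof
  show "ideal_gen K {\<alpha>} \<subseteq> (\<lambda>x. \<alpha> * x) ` OK"
    by (rule gen_least[OF scale_submod[OF OK_submod]]) (auto intro: image_eqI[of _ _ 1] O_1)
  show "(\<lambda>x. \<alpha> * x) ` OK \<subseteq> ideal_gen K {\<alpha>}"
  proof
    fix y assume "y \<in> (\<lambda>x. \<alpha> * x) ` OK"
    then obtain r where r: "r \<in> OK" "y = \<alpha> * r" by blast
    have "r * \<alpha> \<in> ideal_gen K {\<alpha>}" using submod_smult[OF gen_submod r(1)] gen_sub by blast
    then show "y \<in> ideal_gen K {\<alpha>}" using r by (simp add: mult.commute)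
  qed
qed

lemma mult_comm: "ideal_mult K a b = ideal_mult K b a"
proof -
  have *: "{x * y | x y. x \<in> A \<and> y \<in> B} \<subseteq> {x * y | x y. x \<in> B \<and> y \<in> A}" for A B :: "complex set"
  proof
    fix z assume "z \<in> {x * y | x y. x \<in> A \<and> y \<in> B}"
    then obtain x y where xy: "x \<in> A" "y \<in> B" "z = x * y" by blast
    then have "z = y * x" by (simp add: mult.commute)
    then show "z \<in> {x * y | x y. x \<in> B \<and> y \<in> A}" using xy by blast
  qed
  have "{x * y | x y. x \<in> a \<and> y \<in> b} = {x * y | x y. x \<in> b \<and> y \<in> a}"
    using *[of a b] *[of b a] by (rule equalityI)
  then show ?thesis unfolding ideal_mult_def by simp
qed

lemma mult_gen: "ideal_mult K (ideal_gen K T) c = ideal_gen K {t * z | t z. t \<in> T \<and> z \<in> c}"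
proof
  define G where "G = {t * z | t z. t \<in> T \<and> z \<in> c}"
  define R where "R = ideal_gen K G"
  define U where "U = {u. \<forall>z\<in>c. u * z \<in> R}"
  have RS: "O_submod K R" unfolding R_def by (rule gen_submod)
  have GR: "G \<subseteq> R" unfolding R_def by (rule gen_sub)
  have "O_submod K U"
  proof (rule submodI)
    show "0 \<in> U" unfolding U_def using submod_0[OF RS] by simp
    fix x y assume "x \<in> U" "y \<in> U"
    then show "x + y \<in> U" unfolding U_def using submod_add[OF RS] by (simp add: distrib_right)
  next
    fix r x assume "r \<in> OK" "x \<in> U"
    then show "r * x \<in> U" unfolding U_def using submod_smult[OF RS] by (simp add: mult.assoc)
  qed
  moreover have "T \<subseteq> U"
  proof
    fix t assume t: "t \<in> T"
    have "t * z \<in> R" if "z \<in> c" for z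
    proof -
      have "t * z \<in> G" unfolding G_def using t that by blast
      then show ?thesis using GR by (rule subsetD[rotated])
    qed
    then show "t \<in> U" unfolding U_def by simp
  qed
  ultimately have TU: "ideal_gen K T \<subseteq> U" by (rule gen_least)
  have "{x * y | x y. x \<in> ideal_gen K T \<and> y \<in> c} \<subseteq> R"
  proof
    fix u assume "u \<in> {x * y | x y. x \<in> ideal_gen K T \<and> y \<in> c}"
    then obtain x y where xy: "x \<in> ideal_gen K T" "y \<in> c" "u = x * y" by blast
    have "x \<in> U" using TU xy(1) by (rule subsetD)
    then show "u \<in> R" unfolding U_def using xy by simp
  qed
  then show "ideal_mult K (ideal_gen K T) c \<subseteq> ideal_gen K {t * z | t z. t \<in> T \<and> z \<in> c}"
    unfolding ideal_mult_def R_def G_def by (rule gen_least[OF gen_submod])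
  have "G \<subseteq> {x * y | x y. x \<in> ideal_gen K T \<and> y \<in> c}"
  proof
    fix u assume "u \<in> G"
    then obtain t z where tz: "t \<in> T" "z \<in> c" "u = t * z" unfolding G_def by blast
    have "t \<in> ideal_gen K T" using gen_sub tz(1) by (rule subsetD)
    then show "u \<in> {x * y | x y. x \<in> ideal_gen K T \<and> y \<in> c}" using tz by blast
  qed
  then show "ideal_gen K {t * z | t z. t \<in> T \<and> z \<in> c} \<subseteq> ideal_mult K (ideal_gen K T) c"
    unfolding ideal_mult_def G_def by (rule gen_mono)
qed

lemma mult_assoc: "ideal_mult K (ideal_mult K a b) c = ideal_mult K a (ideal_mult K b c)"
proof -
  have "ideal_mult K (ideal_mult K a b) c = ideal_gen K {t * z | t z. t \<in> {x * y | x y. x \<in> a \<and> y \<in> b} \<and> z \<in> c}"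
    unfolding ideal_mult_def[of K a b] by (rule mult_gen)
  also have "{t * z | t z. t \<in> {x * y | x y. x \<in> a \<and> y \<in> b} \<and> z \<in> c}
      = {t * z | t z. t \<in> {x * y | x y. x \<in> b \<and> y \<in> c} \<and> z \<in> a}"
  proof (intro equalityI subsetI)
    fix u assume "u \<in> {t * z | t z. t \<in> {x * y | x y. x \<in> a \<and> y \<in> b} \<and> z \<in> c}"
    then obtain x y z where xyz: "x \<in> a" "y \<in> b" "z \<in> c" "u = (x * y) * z" by blast
    then have "u = (y * z) * x" by (simp add: mult_ac)
    then show "u \<in> {t * z | t z. t \<in> {x * y | x y. x \<in> b \<and> y \<in> c} \<and> z \<in> a}" using xyz by blast
  next
    fix u assume "u \<in> {t * z | t z. t \<in> {x * y | x y. x \<in> b \<and> y \<in> c} \<and> z \<in> a}"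
    then obtain x y z where xyz: "y \<in> b" "z \<in> c" "x \<in> a" "u = (y * z) * x" by blast
    then have "u = (x * y) * z" by (simp add: mult_ac)
    then show "u \<in> {t * z | t z. t \<in> {x * y | x y. x \<in> a \<and> y \<in> b} \<and> z \<in> c}" using xyz by blast
  qed
  also have "ideal_gen K \<dots> = ideal_mult K (ideal_mult K b c) a"
    unfolding ideal_mult_def[of K b c] by (rule mult_gen[symmetric])
  also have "\<dots> = ideal_mult K a (ideal_mult K b c)" by (rule mult_comm)
  finally show ?thesis .
qed

lemma mult_principal:
  assumes a: "O_submod K a"
  shows "ideal_mult K (ideal_gen K {\<alpha>}) a = (\<lambda>x. \<alpha> * x) ` a"
proof -
  have "ideal_mult K (ideal_gen K {\<alpha>}) a = ideal_gen K {t * z | t z. t \<in> {\<alpha>} \<and> z \<in> a}"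
    by (rule mult_gen)
  also have "{t * z | t z. t \<in> {\<alpha>} \<and> z \<in> a} = (\<lambda>x. \<alpha> * x) ` a" by auto
  also have "ideal_gen K ((\<lambda>x. \<alpha> * x) ` a) = (\<lambda>x. \<alpha> * x) ` a"
    using gen_least[OF scale_submod[OF a] order_refl] gen_sub by blast
  finally show ?thesis .
qed

lemma mult_submod: "O_submod K (ideal_mult K a b)"
  unfolding ideal_mult_def by (rule gen_submod)

lemma mult_in: assumes "x \<in> a" "y \<in> b" shows "x * y \<in> ideal_mult K a b"
proof -
  have "x * y \<in> {x * y | x y. x \<in> a \<and> y \<in> b}" using assms by blast
  then show ?thesis unfolding ideal_mult_def by (rule subsetD[OF gen_sub])
qed

lemma K_submod: "O_submod K K"
proof (rule submodI)
  show "0 \<in> K" by (rule Rats_K) simp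
  show "x + y \<in> K" if "x \<in> K" "y \<in> K" for x y using that by (rule K_add)
  show "r * x \<in> K" if "r \<in> OK" "x \<in> K" for r x using O_K[OF that(1)] that(2) by (rule K_mult)
qed

lemma frac_nz: assumes "frac_ideal K a" obtains x where "x \<in> a" "x \<noteq> 0"
proof -
  have "0 \<in> a" "a \<noteq> {0}" using assms unfolding frac_ideal_def O_submod_def by auto
  then show ?thesis using that by blast
qed

lemma frac_submod: "frac_ideal K a \<Longrightarrow> O_submod K a" unfolding frac_ideal_def by blast
lemma frac_K: "frac_ideal K a \<Longrightarrow> a \<subseteq> K" unfolding frac_ideal_def by blast

lemma fracI:
  assumes "a \<subseteq> K" "a \<noteq> {0}" "O_submod K a" "c \<in> OK" "c \<noteq> 0" "\<And>x. x \<in> a \<Longrightarrow> c * x \<in> OK"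
  shows "frac_ideal K a"
  unfolding frac_ideal_def using assms by blast

lemma fracE:
  assumes "frac_ideal K a"
  obtains c where "c \<in> OK" "c \<noteq> 0" "\<And>x. x \<in> a \<Longrightarrow> c * x \<in> OK"
  using assms unfolding frac_ideal_def by blast

lemma frac_mult:
  assumes a: "frac_ideal K a" and b: "frac_ideal K b"
  shows "frac_ideal K (ideal_mult K a b)"
proof -
  obtain x where x: "x \<in> a" "x \<noteq> 0" using frac_nz[OF a] by blast
  obtain y where y: "y \<in> b" "y \<noteq> 0" using frac_nz[OF b] by blast
  obtain c1 where c1: "c1 \<in> OK" "c1 \<noteq> 0" "\<And>x. x \<in> a \<Longrightarrow> c1 * x \<in> OK" using fracE[OF a] by blast
  obtain c2 where c2: "c2 \<in> OK" "c2 \<noteq> 0" "\<And>x. x \<in> b \<Longrightarrow> c2 * x \<in> OK" using fracE[OF b] by blast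
  have "{x * y | x y. x \<in> a \<and> y \<in> b} \<subseteq> K"
  proof
    fix z assume "z \<in> {x * y | x y. x \<in> a \<and> y \<in> b}"
    then obtain u v where uv: "u \<in> a" "v \<in> b" "z = u * v" by blast
    have "u \<in> K" using frac_K[OF a] uv(1) by (rule subsetD)
    moreover have "v \<in> K" using frac_K[OF b] uv(2) by (rule subsetD)
    ultimately show "z \<in> K" unfolding uv(3) by (rule K_mult)
  qed
  then have sub: "ideal_mult K a b \<subseteq> K"
    unfolding ideal_mult_def by (rule gen_least[OF K_submod])
  have nz: "ideal_mult K a b \<noteq> {0}"
  proof
    assume "ideal_mult K a b = {0}"
    then have "x * y = 0" using mult_in[OF x(1) y(1)] by simp
    then show False using x y by simp
  qed
  define I where "I = {z. c1 * c2 * z \<in> OK}"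
  have "O_submod K I"
  proof (rule submodI)
    show "0 \<in> I" unfolding I_def using O_0 by simp
    fix u v assume "u \<in> I" "v \<in> I"
    then have "c1 * c2 * u + c1 * c2 * v \<in> OK" unfolding I_def by (simp add: O_add)
    then show "u + v \<in> I" unfolding I_def by (simp add: distrib_left)
  next
    fix r u assume "r \<in> OK" "u \<in> I"
    then have "r * (c1 * c2 * u) \<in> OK" unfolding I_def by (simp add: O_mult)
    then show "r * u \<in> I" unfolding I_def by (simp add: mult_ac)
  qed
  moreover have "{x * y | x y. x \<in> a \<and> y \<in> b} \<subseteq> I"
  proof
    fix z assume "z \<in> {x * y | x y. x \<in> a \<and> y \<in> b}"
    then obtain u v where uv: "u \<in> a" "v \<in> b" "z = u * v" by blast
    have "(c1 * u) * (c2 * v) \<in> OK" by (rule O_mult[OF c1(3)[OF uv(1)] c2(3)[OF uv(2)]])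
    then show "z \<in> I" unfolding I_def uv(3) by (simp add: mult_ac)
  qed
  ultimately have sI: "ideal_mult K a b \<subseteq> I" unfolding ideal_mult_def by (rule gen_least)
  show ?thesis
  proof (rule fracI[OF sub nz mult_submod])
    show "c1 * c2 \<in> OK" using c1(1) c2(1) by (rule O_mult)
    show "c1 * c2 \<noteq> 0" using c1(2) c2(2) by simp
    fix z assume "z \<in> ideal_mult K a b"
    then have "z \<in> I" using sI by (rule subsetD[rotated])
    then show "c1 * c2 * z \<in> OK" unfolding I_def by simp
  qed
qed

lemma frac_principal:
  assumes al: "\<alpha> \<in> K" "\<alpha> \<noteq> 0"
  shows "frac_ideal K (ideal_gen K {\<alpha>})"
proof -
  obtain d :: int where d: "d > 0" "of_int d * \<alpha> \<in> OK" using K_denom[OF al(1)] by blast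
  have sub: "ideal_gen K {\<alpha>} \<subseteq> K"
  proof
    fix z assume "z \<in> ideal_gen K {\<alpha>}"
    then obtain r where r: "r \<in> OK" "z = \<alpha> * r" unfolding gen_single by blast
    show "z \<in> K" unfolding r(2) using al(1) O_K[OF r(1)] by (rule K_mult)
  qed
  have nz: "ideal_gen K {\<alpha>} \<noteq> {0}"
  proof
    assume "ideal_gen K {\<alpha>} = {0}"
    then show False using gen_sub[of "{\<alpha>}"] al(2) by simp
  qed
  show ?thesis
  proof (rule fracI[OF sub nz gen_submod])
    show "(of_int d :: complex) \<in> OK" by (rule O_int)
    show "(of_int d :: complex) \<noteq> 0" using d by simp
    fix z assume "z \<in> ideal_gen K {\<alpha>}"
    then obtain r where r: "r \<in> OK" "z = \<alpha> * r" unfolding gen_single by blast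
    have "(of_int d * \<alpha>) * r \<in> OK" using d(2) r(1) by (rule O_mult)
    then show "of_int d * z \<in> OK" unfolding r(2) by (simp add: mult_ac)
  qed
qed

lemma frac_scale:
  assumes a: "frac_ideal K a" and al: "\<alpha> \<in> K" "\<alpha> \<noteq> 0"
  shows "frac_ideal K ((\<lambda>x. \<alpha> * x) ` a)"
proof -
  have "frac_ideal K (ideal_mult K (ideal_gen K {\<alpha>}) a)" by (rule frac_mult[OF frac_principal[OF al] a])
  then show ?thesis unfolding mult_principal[OF frac_submod[OF a]] .
qed

lemma frac_cnj:
  assumes a: "frac_ideal K a" shows "frac_ideal K (cnj ` a)"
proof -
  obtain c where c: "c \<in> OK" "c \<noteq> 0" "\<And>x. x \<in> a \<Longrightarrow> c * x \<in> OK" using fracE[OF a] by blast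
  obtain x where x: "x \<in> a" "x \<noteq> 0" using frac_nz[OF a] by blast
  have sa: "O_submod K a" by (rule frac_submod[OF a])
  have sub: "cnj ` a \<subseteq> K"
  proof
    fix z assume "z \<in> cnj ` a"
    then obtain u where u: "u \<in> a" "z = cnj u" by blast
    have "u \<in> K" using frac_K[OF a] u(1) by (rule subsetD)
    then show "z \<in> K" unfolding u(2) by (rule K_cnj)
  qed
  have nz: "cnj ` a \<noteq> {0}"
  proof
    assume "cnj ` a = {0}"
    then have "cnj x = 0" using x(1) by blast
    then show False using x(2) by simp
  qed
  have sm: "O_submod K (cnj ` a)"
  proof (rule submodI)
    have "cnj 0 \<in> cnj ` a" using submod_0[OF sa] by (rule imageI)
    then show "0 \<in> cnj ` a" by simp
    fix u v assume "u \<in> cnj ` a" "v \<in> cnj ` a"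
    then obtain u' v' where uv: "u' \<in> a" "v' \<in> a" "u = cnj u'" "v = cnj v'" by blast
    have "cnj (u' + v') \<in> cnj ` a" using submod_add[OF sa uv(1,2)] by (rule imageI)
    then show "u + v \<in> cnj ` a" using uv by simp
  next
    fix r u assume r: "r \<in> OK" and "u \<in> cnj ` a"
    then obtain u' where u': "u' \<in> a" "u = cnj u'" by blast
    have "cnj (cnj r * u') \<in> cnj ` a" using submod_smult[OF sa O_cnj[OF r] u'(1)] by (rule imageI)
    then show "r * u \<in> cnj ` a" using u' by simp
  qed
  show ?thesis
  proof (rule fracI[OF sub nz sm])
    show "cnj c \<in> OK" using c(1) by (rule O_cnj)
    show "cnj c \<noteq> 0" using c(2) by simp
    fix z assume "z \<in> cnj ` a"
    then obtain u where u: "u \<in> a" "z = cnj u" by blast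
    have "cnj (c * u) \<in> OK" using c(3)[OF u(1)] by (rule O_cnj)
    then show "cnj c * z \<in> OK" unfolding u(2) by simp
  qed
qed

end

context iq
begin

lemma Ints_obtain: "(z :: complex) \<in> \<int> \<Longrightarrow> (\<And>n. z = of_int n \<Longrightarrow> P) \<Longrightarrow> P"
  by (auto elim: Ints_cases)

lemma cancel:
  assumes a: "frac_ideal K a"
  shows "\<exists>g. g \<in> K \<and> g \<noteq> 0 \<and> ideal_mult K a (cnj ` a) = ideal_gen K {g}"
proof -
  obtain c where c: "c \<in> OK" "c \<noteq> 0" "\<And>x. x \<in> a \<Longrightarrow> c * x \<in> OK" using fracE[OF a] by blast
  obtain x0 where x0: "x0 \<in> a" "x0 \<noteq> 0" using frac_nz[OF a] by blast
  have sa: "O_submod K a" by (rule frac_submod[OF a])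
  have "c * cnj c \<in> \<int>" by (rule O_nrm[OF c(1)])
  then obtain m :: int where m: "c * cnj c = of_int m" by (rule Ints_obtain)
  have m0: "m \<noteq> 0" using m c(2) by (metis complex_cnj_zero_iff mult_eq_0_iff of_int_0)
  define M where "M = m * m"
  have M0: "M \<noteq> 0" using m0 by (simp add: M_def)
  have mx: "of_int m * x \<in> OK" if "x \<in> a" for x
  proof -
    have "cnj c * (c * x) \<in> OK" by (rule O_mult[OF O_cnj[OF c(1)] c(3)[OF that]])
    moreover have "cnj c * (c * x) = (c * cnj c) * x" by (simp only: mult_ac)
    ultimately show ?thesis unfolding m by simp
  qed
  have Mx: "of_int M * (x * cnj x) \<in> \<int>" if "x \<in> a" for x
  proof -
    have "(of_int m * x) * cnj (of_int m * x) \<in> \<int>" by (rule O_nrm[OF mx[OF that]])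
    then show ?thesis by (simp add: M_def mult_ac)
  qed
  define P where "P = ideal_mult K a (cnj ` a)"
  have sP: "O_submod K P" unfolding P_def by (rule mult_submod)
  have nP: "x * cnj y \<in> P" if "x \<in> a" "y \<in> a" for x y
    unfolding P_def using that by (intro mult_in) auto
  define J where "J = {n :: int. of_int n / of_int M \<in> P}"
  have J_add: "n1 + n2 \<in> J" if "n1 \<in> J" "n2 \<in> J" for n1 n2
  proof -
    have "of_int n1 / of_int M + of_int n2 / of_int M \<in> P"
      using that unfolding J_def by (intro submod_add[OF sP]) auto
    then show ?thesis unfolding J_def by (simp add: add_divide_distrib)
  qed
  have J_mult: "k * n \<in> J" if "n \<in> J" for k n
  proof -
    have "of_int k * (of_int n / of_int M) \<in> P"
      using that unfolding J_def by (intro submod_int[OF sP]) auto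
    then show ?thesis unfolding J_def by simp
  qed
  have J_nrm: "\<exists>k. k \<in> J \<and> of_int M * (x * cnj x) = of_int k" if xa: "x \<in> a" for x
  proof -
    obtain k where k: "of_int M * (x * cnj x) = of_int k" using Mx[OF xa] by (rule Ints_obtain)
    have "of_int k / of_int M = x * cnj x" using k M0 by (simp add: field_simps)
    then have "k \<in> J" unfolding J_def using nP[OF xa xa] by simp
    then show ?thesis using k by blast
  qed
  obtain k0 where k0: "k0 \<in> J" "of_int M * (x0 * cnj x0) = of_int k0" using J_nrm[OF x0(1)] by blast
  have "k0 \<noteq> 0" using k0(2) M0 x0(2) by (metis complex_cnj_zero_iff mult_eq_0_iff of_int_0_eq_iff)
  have ex_pos: "\<exists>n. 0 < n \<and> n \<in> J"
  proof (cases "k0 > 0")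
    case True then show ?thesis using k0(1) by blast
  next
    case False
    then have "0 < (-1) * k0" using \<open>k0 \<noteq> 0\<close> by simp
    moreover have "(-1) * k0 \<in> J" by (rule J_mult[OF k0(1)])
    ultimately show ?thesis by blast
  qed
  have ex_pos': "\<exists>k :: nat. 0 < k \<and> int k \<in> J"
  proof -
    obtain n where n: "0 < n" "n \<in> J" using ex_pos by blast
    then have "0 < nat n \<and> int (nat n) \<in> J" by simp
    then show ?thesis by blast
  qed
  define kk where "kk = (LEAST k :: nat. 0 < k \<and> int k \<in> J)"
  have kkP: "0 < kk \<and> int kk \<in> J" unfolding kk_def by (rule LeastI_ex[OF ex_pos'])
  define n0 where "n0 = int kk"
  have n0: "0 < n0" "n0 \<in> J" using kkP unfolding n0_def by auto
  have n0_dvd: "n0 dvd n" if "n \<in> J" for n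
  proof -
    have "n + (- (n div n0)) * n0 \<in> J" by (intro J_add J_mult that n0(2))
    moreover have "n + (- (n div n0)) * n0 = n mod n0" by (simp add: minus_div_mult_eq_mod[symmetric] algebra_simps)
    ultimately have mJ: "n mod n0 \<in> J" by simp
    have "n mod n0 = 0"
    proof (rule ccontr)
      assume "n mod n0 \<noteq> 0"
      then have "0 < n mod n0" using n0(1) by (metis pos_mod_sign order_le_less)
      then have "0 < nat (n mod n0) \<and> int (nat (n mod n0)) \<in> J" using mJ by simp
      then have "kk \<le> nat (n mod n0)" unfolding kk_def by (rule Least_le)
      then have "int kk \<le> int (nat (n mod n0))" by (simp only: of_nat_le_iff)
      also have "int (nat (n mod n0)) = n mod n0" using \<open>0 < n mod n0\<close> by simp
      finally have "n0 \<le> n mod n0" unfolding n0_def .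
      moreover have "n mod n0 < n0" using n0(1) by simp
      ultimately show False by simp
    qed
    then show ?thesis by (simp add: mod_eq_0_iff_dvd)
  qed
  define g where "g = (of_int n0 / of_int M :: complex)"
  have gP: "g \<in> P" using n0(2) unfolding J_def g_def by simp
  have g0: "g \<noteq> 0" using n0(1) M0 unfolding g_def by simp
  have gK: "g \<in> K" unfolding g_def by (intro Rats_K) simp
  have cg: "cnj g = g" unfolding g_def by simp
  have jx: "\<exists>j :: int. x * cnj x = of_int j * g" if xa: "x \<in> a" for x
  proof -
    obtain k where k: "k \<in> J" "of_int M * (x * cnj x) = of_int k" using J_nrm[OF xa] by blast
    obtain j where j: "k = n0 * j" using n0_dvd[OF k(1)] by (auto elim: dvdE)
    have "x * cnj x = of_int k / of_int M" using k(2) M0 by (simp add: field_simps)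
    also have "\<dots> = of_int j * g" unfolding j g_def by simp
    finally show ?thesis by blast
  qed
  have zO: "x * cnj y / g \<in> OK" if x: "x \<in> a" and y: "y \<in> a" for x y
  proof -
    have xK: "x \<in> K" using frac_K[OF a] x by blast
    have yK: "y \<in> K" using frac_K[OF a] y by blast
    define z where "z = x * cnj y / g"
    have zK: "z \<in> K" unfolding z_def divide_inverse
      by (intro K_mult K_cnj K_inverse xK yK gK)
    obtain j1 where j1: "x * cnj x = of_int j1 * g" using jx[OF x] by blast
    obtain j2 where j2: "y * cnj y = of_int j2 * g" using jx[OF y] by blast
    obtain j3 where j3: "(x + y) * cnj (x + y) = of_int j3 * g" using jx[OF submod_add[OF sa x y]] by blast
    have "z + cnj z = (x * cnj y + cnj x * y) / g" unfolding z_def using cg by (simp add: add_divide_distrib)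
    also have "x * cnj y + cnj x * y = (x + y) * cnj (x + y) - x * cnj x - y * cnj y"
      by (simp add: algebra_simps)
    also have "\<dots> = of_int (j3 - j1 - j2) * g" unfolding j1 j2 j3 by (simp add: algebra_simps)
    finally have t: "z + cnj z = of_int (j3 - j1 - j2)" using g0 by simp
    have "z * cnj z = (x * cnj x) * (y * cnj y) / (g * g)" unfolding z_def using cg by (simp add: mult_ac)
    also have "\<dots> = of_int (j1 * j2)" unfolding j1 j2 using g0 by simp
    finally have n: "z * cnj z = of_int (j1 * j2)" .
    have "z \<in> OK" by (rule O_intro[OF zK]) (simp_all add: t n)
    then show ?thesis unfolding z_def .
  qed
  have "P \<subseteq> ideal_gen K {g}"
  proof -
    have "{x * y | x y. x \<in> a \<and> y \<in> cnj ` a} \<subseteq> ideal_gen K {g}"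
    proof
      fix u assume "u \<in> {x * y | x y. x \<in> a \<and> y \<in> cnj ` a}"
      then obtain x y where xy: "x \<in> a" "y \<in> a" "u = x * cnj y" by blast
      have "u = g * (x * cnj y / g)" using xy(3) g0 by simp
      moreover have "g * (x * cnj y / g) \<in> (\<lambda>x. g * x) ` OK" by (rule imageI[OF zO[OF xy(1,2)]])
      ultimately show "u \<in> ideal_gen K {g}" unfolding gen_single by simp
    qed
    then show ?thesis unfolding P_def ideal_mult_def by (rule gen_least[OF gen_submod])
  qed
  moreover have "ideal_gen K {g} \<subseteq> P" using gP by (intro gen_least[OF sP]) simp
  ultimately have "P = ideal_gen K {g}" by (rule equalityI)
  then show ?thesis unfolding P_def using gK g0 by blast
qed

end

context iq
begin

lemma scale_scale: "(\<lambda>x. (\<beta>::complex) * x) ` ((\<lambda>x. \<alpha> * x) ` a) = (\<lambda>x. (\<beta> * \<alpha>) * x) ` a"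
  unfolding image_image by (intro image_cong refl) (simp only: mult.assoc)

lemma equivI: "\<alpha> \<in> K \<Longrightarrow> \<alpha> \<noteq> 0 \<Longrightarrow> ideal_equiv K a ((\<lambda>x. \<alpha> * x) ` a)"
  unfolding ideal_equiv_def by blast

lemma equivE:
  assumes "ideal_equiv K a b" obtains \<alpha> where "\<alpha> \<in> K" "\<alpha> \<noteq> 0" "b = (\<lambda>x. \<alpha> * x) ` a"
  using assms unfolding ideal_equiv_def by blast

lemma equiv_refl: "ideal_equiv K a a"
  using equivI[of 1 a] Rats_K[of 1] by simp

lemma equiv_sym: assumes "ideal_equiv K a b" shows "ideal_equiv K b a"
proof -
  obtain \<alpha> where al: "\<alpha> \<in> K" "\<alpha> \<noteq> 0" "b = (\<lambda>x. \<alpha> * x) ` a" using assms by (rule equivE)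
  have "(\<lambda>x. inverse \<alpha> * x) ` b = (\<lambda>x. (inverse \<alpha> * \<alpha>) * x) ` a" unfolding al(3) by (rule scale_scale)
  also have "\<dots> = a" using al(2) by simp
  finally have e: "a = (\<lambda>x. inverse \<alpha> * x) ` b" by simp
  show ?thesis unfolding e by (rule equivI) (use al K_inverse in auto)
qed

lemma equiv_trans: assumes "ideal_equiv K a b" "ideal_equiv K b c" shows "ideal_equiv K a c"
proof -
  obtain \<alpha> where al: "\<alpha> \<in> K" "\<alpha> \<noteq> 0" "b = (\<lambda>x. \<alpha> * x) ` a" using assms(1) by (rule equivE)
  obtain \<beta> where be: "\<beta> \<in> K" "\<beta> \<noteq> 0" "c = (\<lambda>x. \<beta> * x) ` b" using assms(2) by (rule equivE)
  have e: "c = (\<lambda>x. (\<beta> * \<alpha>) * x) ` a" unfolding be(3) al(3) by (rule scale_scale)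
  show ?thesis unfolding e by (rule equivI) (use al be K_mult in auto)
qed

lemma equiv_mult:
  assumes b: "O_submod K b" and x: "O_submod K x" and xy: "ideal_equiv K x y"
  shows "ideal_equiv K (ideal_mult K b x) (ideal_mult K b y)"
proof -
  obtain \<alpha> where al: "\<alpha> \<in> K" "\<alpha> \<noteq> 0" "y = (\<lambda>z. \<alpha> * z) ` x" using xy by (rule equivE)
  have "ideal_mult K b y = ideal_mult K b (ideal_mult K (ideal_gen K {\<alpha>}) x)"
    unfolding al(3) mult_principal[OF x] ..
  also have "\<dots> = ideal_mult K (ideal_mult K b (ideal_gen K {\<alpha>})) x" by (rule mult_assoc[symmetric])
  also have "\<dots> = ideal_mult K (ideal_mult K (ideal_gen K {\<alpha>}) b) x" by (simp only: mult_comm[of b])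
  also have "\<dots> = ideal_mult K (ideal_gen K {\<alpha>}) (ideal_mult K b x)" by (rule mult_assoc)
  also have "\<dots> = (\<lambda>z. \<alpha> * z) ` (ideal_mult K b x)" by (rule mult_principal[OF mult_submod])
  finally have e: "ideal_mult K b y = (\<lambda>z. \<alpha> * z) ` (ideal_mult K b x)" .
  show ?thesis unfolding e by (rule equivI[OF al(1,2)])
qed

lemma equiv_cancel:
  assumes a: "frac_ideal K a" and x: "frac_ideal K x" and y: "frac_ideal K y"
    and e: "ideal_equiv K (ideal_mult K a x) (ideal_mult K a y)"
  shows "ideal_equiv K x y"
proof -
  obtain g where g: "g \<in> K" "g \<noteq> 0" "ideal_mult K a (cnj ` a) = ideal_gen K {g}"
    using cancel[OF a] by blast
  have sa': "O_submod K (cnj ` a)" by (rule frac_submod[OF frac_cnj[OF a]])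
  have key: "ideal_mult K (cnj ` a) (ideal_mult K a z) = (\<lambda>u. g * u) ` z" if z: "frac_ideal K z" for z
  proof -
    have "ideal_mult K (cnj ` a) (ideal_mult K a z) = ideal_mult K (ideal_mult K (cnj ` a) a) z"
      by (rule mult_assoc[symmetric])
    also have "\<dots> = ideal_mult K (ideal_gen K {g}) z" by (simp only: mult_comm[of "cnj ` a"] g(3))
    also have "\<dots> = (\<lambda>u. g * u) ` z" by (rule mult_principal[OF frac_submod[OF z]])
    finally show ?thesis .
  qed
  have "ideal_equiv K (ideal_mult K (cnj ` a) (ideal_mult K a x)) (ideal_mult K (cnj ` a) (ideal_mult K a y))"
    by (rule equiv_mult[OF sa' mult_submod e])
  then have gxy: "ideal_equiv K ((\<lambda>u. g * u) ` x) ((\<lambda>u. g * u) ` y)" by (simp only: key[OF x] key[OF y])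
  have "ideal_equiv K x ((\<lambda>u. g * u) ` x)" by (rule equivI[OF g(1,2)])
  moreover have "ideal_equiv K ((\<lambda>u. g * u) ` y) y" by (rule equiv_sym[OF equivI[OF g(1,2)]])
  ultimately show ?thesis using gxy equiv_trans by blast
qed

definition cls where "cls a = {b. frac_ideal K b \<and> ideal_equiv K a b}"

lemma class_group_eq: "class_group K = {cls a | a. frac_ideal K a}"
  unfolding class_group_def cls_def ..

lemma cls_self: "frac_ideal K a \<Longrightarrow> a \<in> cls a"
  unfolding cls_def using equiv_refl by simp

lemma cls_eq_iff:
  assumes "frac_ideal K a" "frac_ideal K b"
  shows "cls a = cls b \<longleftrightarrow> ideal_equiv K a b"
proof
  assume "cls a = cls b"
  then have "b \<in> cls a" using cls_self[OF assms(2)] by simp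
  then show "ideal_equiv K a b" unfolding cls_def by simp
next
  assume ab: "ideal_equiv K a b"
  show "cls a = cls b"
  proof (intro equalityI subsetI)
    fix c assume "c \<in> cls a"
    then show "c \<in> cls b" unfolding cls_def using equiv_trans[OF equiv_sym[OF ab]] by blast
  next
    fix c assume "c \<in> cls b"
    then show "c \<in> cls a" unfolding cls_def using equiv_trans[OF ab] by blast
  qed
qed

lemma psi_pow:
  fixes \<psi> :: "complex set \<Rightarrow> complex"
  assumes fin: "finite (class_group K)"
    and mult: "\<And>a b. frac_ideal K a \<Longrightarrow> frac_ideal K b \<Longrightarrow> \<psi> (ideal_mult K a b) = \<psi> a * \<psi> b"
    and inv: "\<And>a b. frac_ideal K a \<Longrightarrow> frac_ideal K b \<Longrightarrow> ideal_equiv K a b \<Longrightarrow> \<psi> b = \<psi> a"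
    and nz: "\<And>a. frac_ideal K a \<Longrightarrow> \<psi> a \<noteq> 0"
    and a: "frac_ideal K a"
  shows "\<psi> a ^ card (class_group K) = 1"
proof -
  define Cl where "Cl = class_group K"
  define rep where "rep X = (SOME b. b \<in> X)" for X :: "complex set set"
  have rep: "frac_ideal K (rep X) \<and> cls (rep X) = X" if XCl: "X \<in> Cl" for X
  proof -
    obtain b0 where b0: "frac_ideal K b0" "X = cls b0" using XCl unfolding Cl_def class_group_eq by blast
    have "b0 \<in> X" using cls_self[OF b0(1)] b0(2) by simp
    then have "rep X \<in> X" unfolding rep_def by (rule someI)
    then have r: "frac_ideal K (rep X)" "ideal_equiv K b0 (rep X)" unfolding b0(2) cls_def by auto
    have "cls b0 = cls (rep X)" using cls_eq_iff[OF b0(1) r(1)] r(2) by simp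
    then show ?thesis using r(1) b0(2) by simp
  qed
  have rep_cls: "frac_ideal K (rep (cls c)) \<and> ideal_equiv K c (rep (cls c))" if c: "frac_ideal K c" for c
  proof -
    have "cls c \<in> Cl" unfolding Cl_def class_group_eq using c by blast
    then have r: "frac_ideal K (rep (cls c))" "cls (rep (cls c)) = cls c" using rep by blast+
    have "ideal_equiv K c (rep (cls c))" using cls_eq_iff[OF c r(1)] r(2) by simp
    then show ?thesis using r(1) by blast
  qed
  define \<Phi> where "\<Phi> X = cls (ideal_mult K a (rep X))" for X
  define \<Psi> where "\<Psi> X = \<psi> (rep X)" for X
  have \<Phi>_in: "\<Phi> X \<in> Cl" if "X \<in> Cl" for X
    unfolding \<Phi>_def Cl_def class_group_eq using frac_mult[OF a conjunct1[OF rep[OF that]]] by blast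
  have inj: "inj_on \<Phi> Cl"
  proof (rule inj_onI)
    fix X Y assume X: "X \<in> Cl" and Y: "Y \<in> Cl" and e: "\<Phi> X = \<Phi> Y"
    have rX: "frac_ideal K (rep X)" "cls (rep X) = X" using rep[OF X] by blast+
    have rY: "frac_ideal K (rep Y)" "cls (rep Y) = Y" using rep[OF Y] by blast+
    have "ideal_equiv K (ideal_mult K a (rep X)) (ideal_mult K a (rep Y))"
      using e unfolding \<Phi>_def by (subst cls_eq_iff[symmetric]) (use frac_mult[OF a rX(1)] frac_mult[OF a rY(1)] in auto)
    then have "ideal_equiv K (rep X) (rep Y)" by (rule equiv_cancel[OF a rX(1) rY(1)])
    then have "cls (rep X) = cls (rep Y)" using cls_eq_iff[OF rX(1) rY(1)] by simp
    then show "X = Y" using rX(2) rY(2) by simp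
  qed
  have img: "\<Phi> ` Cl = Cl"
    by (rule endo_inj_surj) (use fin \<Phi>_in inj in \<open>auto simp: Cl_def\<close>)
  have \<Psi>\<Phi>: "\<Psi> (\<Phi> X) = \<psi> a * \<Psi> X" if X: "X \<in> Cl" for X
  proof -
    have rX: "frac_ideal K (rep X)" using rep[OF X] by blast
    have c: "frac_ideal K (ideal_mult K a (rep X))" by (rule frac_mult[OF a rX])
    have "\<Psi> (\<Phi> X) = \<psi> (ideal_mult K a (rep X))"
      unfolding \<Psi>_def \<Phi>_def using rep_cls[OF c] inv[OF c] by blast
    also have "\<dots> = \<psi> a * \<Psi> X" unfolding \<Psi>_def by (rule mult[OF a rX])
    finally show ?thesis .
  qed
  have "prod \<Psi> Cl = prod \<Psi> (\<Phi> ` Cl)" by (simp only: img)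
  also have "\<dots> = prod (\<Psi> \<circ> \<Phi>) Cl" by (rule prod.reindex[OF inj])
  also have "\<dots> = prod (\<lambda>X. \<psi> a * \<Psi> X) Cl" by (rule prod.cong) (simp_all add: \<Psi>\<Phi>)
  also have "\<dots> = \<psi> a ^ card Cl * prod \<Psi> Cl" by (simp add: prod.distrib)
  finally have eq: "prod \<Psi> Cl = \<psi> a ^ card Cl * prod \<Psi> Cl" .
  have "prod \<Psi> Cl \<noteq> 0"
  proof -
    have "\<Psi> X \<noteq> 0" if "X \<in> Cl" for X unfolding \<Psi>_def using nz rep[OF that] by blast
    then show ?thesis using fin unfolding Cl_def by (simp add: prod_zero_iff Cl_def)
  qed
  then show ?thesis using eq unfolding Cl_def by simp
qed

lemma chi_scale:
  assumes chi: "hecke_char_m2 K chi" and a: "frac_ideal K a" and al: "\<alpha> \<in> K" "\<alpha> \<noteq> 0"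
  shows "chi ((\<lambda>x. \<alpha> * x) ` a) = inverse (\<alpha> ^ 2) * chi a"
proof -
  have "(\<lambda>x. \<alpha> * x) ` a = ideal_mult K (ideal_gen K {\<alpha>}) a"
    by (rule mult_principal[OF frac_submod[OF a], symmetric])
  then have "chi ((\<lambda>x. \<alpha> * x) ` a) = chi (ideal_gen K {\<alpha>}) * chi a"
    using chi frac_principal[OF al] a unfolding hecke_char_m2_def by simp
  also have "chi (ideal_gen K {\<alpha>}) = inverse (\<alpha> ^ 2)" using chi al unfolding hecke_char_m2_def by simp
  finally show ?thesis .
qed

end

definition contP :: "(complex \<Rightarrow> 'b \<Rightarrow> complex) \<Rightarrow> 'b set \<Rightarrow> complex \<Rightarrow> bool" where
  "contP F A w = (\<exists>g S \<sigma>. \<not> (\<exists>z. z islimpt S) \<and> 0 \<notin> S \<and> g holomorphic_on (- S) \<and>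
                 (\<forall>s. Re s > \<sigma> \<longrightarrow> s \<notin> S \<and> F s summable_on A \<and> g s = infsum (F s) A) \<and> g 0 = w)"

lemma cont_at_0_alt: "cont_at_0 F A = (if \<exists>w. contP F A w then THE w. contP F A w else 0)"
  unfolding cont_at_0_def contP_def Let_def ..

lemma contP_unique:
  assumes "contP F A w1" "contP F A w2" shows "w1 = w2"
proof -
  obtain g1 S1 \<sigma>1 where 1: "\<not> (\<exists>z. z islimpt S1)" "0 \<notin> S1" "g1 holomorphic_on (- S1)"
     "\<forall>s. Re s > \<sigma>1 \<longrightarrow> s \<notin> S1 \<and> F s summable_on A \<and> g1 s = infsum (F s) A" "g1 0 = w1"
    using assms(1) unfolding contP_def by blast
  obtain g2 S2 \<sigma>2 where 2: "\<not> (\<exists>z. z islimpt S2)" "0 \<notin> S2" "g2 holomorphic_on (- S2)"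
     "\<forall>s. Re s > \<sigma>2 \<longrightarrow> s \<notin> S2 \<and> F s summable_on A \<and> g2 s = infsum (F s) A" "g2 0 = w2"
    using assms(2) unfolding contP_def by blast
  define T where "T = S1 \<union> S2"
  have noT: "\<not> z islimpt T" for z using 1(1) 2(1) unfolding T_def islimpt_Un by blast
  have clT: "closed T" unfolding closed_limpt using noT by blast
  have "T sparse_in UNIV" using noT by (simp add: sparse_in_open)
  then have "countable (UNIV \<inter> T)" by (intro sparse_imp_countable) simp_all
  then have ctT: "countable T" by simp
  have "connected (UNIV - T)"
    by (rule connected_open_diff_countable) (simp_all add: ctT connected_UNIV)
  then have conn: "connected (- T)" by (simp add: Compl_eq_Diff_UNIV)
  have op: "open (- T)" using clT by (simp add: open_Compl)
  define s where "s = {z. Re z > max \<sigma>1 \<sigma>2}"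
  have ops: "open s" unfolding s_def by (rule open_halfspace_Re_gt)
  have "complex_of_real (max \<sigma>1 \<sigma>2 + 1) \<in> s" unfolding s_def by (auto simp: max_def)
  then have sne: "s \<noteq> {}" by blast
  have ss: "s \<subseteq> - T" unfolding s_def T_def using 1(4) 2(4) by auto
  have h1: "g1 holomorphic_on (- T)" using 1(3) by (rule holomorphic_on_subset) (auto simp: T_def)
  have h2: "g2 holomorphic_on (- T)" using 2(3) by (rule holomorphic_on_subset) (auto simp: T_def)
  have eq: "g1 z = g2 z" if "z \<in> s" for z
  proof -
    have "Re z > \<sigma>1" "Re z > \<sigma>2" using that unfolding s_def by auto
    then show ?thesis using 1(4) 2(4) by simp
  qed
  have "0 \<in> - T" using 1(2) 2(2) unfolding T_def by simp
  then have "g1 0 = g2 0" using analytic_continuation_open[OF ops op sne conn ss h1 h2, of 0] eq by blast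
  then show ?thesis using 1(5) 2(5) by simp
qed

lemma contP_scale:
  assumes "contP F A w" shows "contP (\<lambda>s x. c * F s x) A (c * w)"
proof -
  obtain g S \<sigma> where 1: "\<not> (\<exists>z. z islimpt S)" "0 \<notin> S" "g holomorphic_on (- S)"
     "\<forall>s. Re s > \<sigma> \<longrightarrow> s \<notin> S \<and> F s summable_on A \<and> g s = infsum (F s) A" "g 0 = w"
    using assms unfolding contP_def by blast
  have "(\<lambda>s. c * g s) holomorphic_on (- S)" using 1(3) by (intro holomorphic_intros)
  moreover have "\<forall>s. Re s > \<sigma> \<longrightarrow> s \<notin> S \<and> (\<lambda>x. c * F s x) summable_on A \<and> c * g s = infsum (\<lambda>x. c * F s x) A"
  proof (intro allI impI conjI)
    fix s assume s: "Re s > \<sigma>"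
    show "s \<notin> S" using 1(4) s by blast
    have sm: "F s summable_on A" using 1(4) s by blast
    show "(\<lambda>x. c * F s x) summable_on A" using sm by (rule summable_on_cmult_right)
    show "c * g s = infsum (\<lambda>x. c * F s x) A" using 1(4) s sm by (simp add: infsum_cmult_right)
  qed
  ultimately show ?thesis unfolding contP_def using 1(1,2,5) by blast
qed

lemma cont_at_0_scale:
  assumes c: "c \<noteq> 0"
  shows "cont_at_0 (\<lambda>s x. c * F s x) A = c * cont_at_0 F A"
proof (cases "\<exists>w. contP F A w")
  case True
  then obtain w where w: "contP F A w" by blast
  have w': "contP (\<lambda>s x. c * F s x) A (c * w)" by (rule contP_scale[OF w])
  have "(THE w. contP F A w) = w" using w contP_unique by blast
  moreover have "(THE w. contP (\<lambda>s x. c * F s x) A w) = c * w" using w' contP_unique by blast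
  ultimately show ?thesis unfolding cont_at_0_alt using w w' by auto
next
  case False
  have nF: "\<not> (\<exists>w. contP (\<lambda>s x. c * F s x) A w)"
  proof
    assume "\<exists>w. contP (\<lambda>s x. c * F s x) A w"
    then obtain w where "contP (\<lambda>s x. c * F s x) A w" by blast
    then have "contP (\<lambda>s x. inverse c * (c * F s x)) A (inverse c * w)" by (rule contP_scale)
    moreover have "(\<lambda>s x. inverse c * (c * F s x)) = F" using c by (intro ext) (simp add: field_simps)
    ultimately have "contP F A (inverse c * w)" by simp
    then show False using False by blast
  qed
  show ?thesis by (simp only: cont_at_0_alt if_not_P[OF False] if_not_P[OF nF]) simp
qed

lemma countable_span:
  assumes B: "finite B" and L: "countable L"
  shows "countable {(\<Sum>b\<in>B. f b * b) | f. \<forall>b\<in>B. f b \<in> L}"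
proof -
  have "{(\<Sum>b\<in>B. f b * b) | f. \<forall>b\<in>B. f b \<in> L} \<subseteq> (\<lambda>f. \<Sum>b\<in>B. f b * b) ` (Pi\<^sub>E B (\<lambda>_. L))"
  proof
    fix x assume "x \<in> {(\<Sum>b\<in>B. f b * b) | f. \<forall>b\<in>B. f b \<in> L}"
    then obtain f where f: "\<forall>b\<in>B. f b \<in> L" "x = (\<Sum>b\<in>B. f b * b)" by blast
    have "restrict f B \<in> Pi\<^sub>E B (\<lambda>_. L)" using f(1) by simp
    moreover have "x = (\<Sum>b\<in>B. restrict f B b * b)" unfolding f(2) by (intro sum.cong) auto
    ultimately show "x \<in> (\<lambda>f. \<Sum>b\<in>B. f b * b) ` (Pi\<^sub>E B (\<lambda>_. L))" by blast
  qed
  moreover have "countable ((\<lambda>f. \<Sum>b\<in>B. f b * b) ` (Pi\<^sub>E B (\<lambda>_. L)))"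
    by (intro countable_image countable_PiE B L)
  ultimately show ?thesis by (rule countable_subset)
qed

lemma fin_ext_countable:
  assumes "fin_ext K L" "countable K" shows "countable L"
proof -
  obtain B where B: "finite B" "L = {(\<Sum>b\<in>B. f b * b) | f. \<forall>b\<in>B. f b \<in> K}"
    using assms(1) unfolding fin_ext_def by blast
  show ?thesis unfolding B(2) by (rule countable_span[OF B(1) assms(2)])
qed

lemma E_form_scale:
  assumes "chi a \<noteq> 0"
  shows "E_form K chi a z v k = inverse (chi a) * E_form K (\<lambda>_. 1) a z v k"
proof (cases "v > 0")
  case True
  have e: "(\<lambda>s (c, d). inverse (chi a) * complex_of_real (ideal_norm K a) powr s * eta z v c d s k)
     = (\<lambda>s x. inverse (chi a) * (\<lambda>s (c, d). inverse 1 * complex_of_real (ideal_norm K a) powr s * eta z v c d s k) s x)"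
    by (intro ext) (auto simp: split_beta mult.assoc)
  have ic: "inverse (chi a) \<noteq> 0" using assms by simp
  show ?thesis unfolding E_form_def using True
    by (simp only: if_True e cont_at_0_scale[OF ic])
next
  case False then show ?thesis unfolding E_form_def by simp
qed

lemma L_Eis_sub:
  assumes sF: "subfield F"
    and chi1: "\<And>a. frac_ideal K a \<Longrightarrow> chi1 a \<noteq> 0"
    and chi2: "\<And>a. frac_ideal K a \<Longrightarrow> chi2 a \<noteq> 0"
    and rat: "\<And>a. frac_ideal K a \<Longrightarrow> chi2 a / chi1 a \<in> F \<and> alg_int (chi2 a / chi1 a)"
  shows "L_Eis K F chi1 \<subseteq> L_Eis K F chi2"
proof
  fix f assume "f \<in> L_Eis K F chi1"
  then obtain A r where A: "finite A" "\<forall>a\<in>A. frac_ideal K a" "\<forall>a\<in>A. r a \<in> ints_of F"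
    and f: "f = (\<lambda>z v k. \<Sum>a\<in>A. r a * E_form K chi1 a z v k)"
    unfolding L_Eis_def by blast
  define r' where "r' a = r a * (chi2 a / chi1 a)" for a
  have r': "\<forall>a\<in>A. r' a \<in> ints_of F"
  proof
    fix a assume aA: "a \<in> A"
    have ra: "r a \<in> F" "alg_int (r a)" using A(3) aA unfolding ints_of_def by auto
    have q: "chi2 a / chi1 a \<in> F" "alg_int (chi2 a / chi1 a)" using rat A(2) aA by blast+
    have "r' a \<in> F" unfolding r'_def using sF ra(1) q(1) unfolding subfield_def by blast
    moreover have "alg_int (r' a)" unfolding r'_def by (rule alg_int_closed(2)[OF ra(2) q(2)])
    ultimately show "r' a \<in> ints_of F" unfolding ints_of_def by simp
  qed
  have "f = (\<lambda>z v k. \<Sum>a\<in>A. r' a * E_form K chi2 a z v k)"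
  proof (intro ext)
    fix z v k
    have "r a * E_form K chi1 a z v k = r' a * E_form K chi2 a z v k" if aA: "a \<in> A" for a
    proof -
      have fa: "frac_ideal K a" using A(2) aA by blast
      have n1: "chi1 a \<noteq> 0" by (rule chi1[OF fa])
      have n2: "chi2 a \<noteq> 0" by (rule chi2[OF fa])
      show ?thesis unfolding r'_def E_form_scale[where chi=chi1 and a=a, OF n1] E_form_scale[where chi=chi2 and a=a, OF n2]
        using n1 n2 by (simp add: field_simps)
    qed
    then show "f z v k = (\<Sum>a\<in>A. r' a * E_form K chi2 a z v k)"
      unfolding f by (intro sum.cong) auto
  qed
  then show "f \<in> L_Eis K F chi2" unfolding L_Eis_def using A(1,2) r' by blast
qed

theorem mainTheorem7:
  fixes K H F :: "complex set" and chi chi2 :: "complex set \<Rightarrow> complex"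
  assumes "imag_quadratic K"
    and "units_of_ring (ints_of K) = {1, -1}"
    and "hilbert_class_field K H"
    and "galois_ext H F"
    and "\<forall>a. frac_ideal K a \<longrightarrow> chi a \<in> F"
    and "\<forall>\<zeta>. \<zeta> ^ class_number K = 1 \<longrightarrow> \<zeta> \<in> F"
    and "hecke_char_m2 K chi"
    and "hecke_char_m2 K chi2"
  shows "L_Eis K F chi = L_Eis K F chi2"
proof -
  obtain D :: int where D: "D < 0" "K = {a + b * csqrt (of_int D) | a b. a \<in> \<rat> \<and> b \<in> \<rat>}"
    using assms(1) unfolding imag_quadratic_def by blast
  interpret iq K D using D by unfold_locales
  have finH: "fin_ext K H" using assms(3) unfolding hilbert_class_field_def abelian_ext_def galois_ext_def by blast
  have finF: "fin_ext H F" using assms(4) unfolding galois_ext_def by blast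
  have sF: "subfield F" using finF unfolding fin_ext_def by blast
  have cF: "countable F" by (rule fin_ext_countable[OF finF fin_ext_countable[OF finH K_countable]])
  have fin: "finite (class_group K)"
  proof (rule ccontr)
    assume "infinite (class_group K)"
    then have "class_number K = 0" unfolding class_number_def by simp
    then have "UNIV \<subseteq> F" using assms(6) by auto
    then have "countable (UNIV :: complex set)" using cF countable_subset by blast
    then show False using uncountable_UNIV_complex by blast
  qed
  define h where "h = class_number K"
  have h1: "h \<ge> 1"
  proof -
    have "frac_ideal K (ideal_gen K {1})" by (rule frac_principal) (simp_all add: Rats_K)
    then have "cls (ideal_gen K {1}) \<in> class_group K" unfolding class_group_eq by blast
    then have "class_group K \<noteq> {}" by blast
    then show ?thesis using fin unfolding h_def class_number_def by (simp add: Suc_le_eq card_gt_0_iff)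
  qed
  have c1: "\<And>a. frac_ideal K a \<Longrightarrow> chi a \<noteq> 0" using assms(7) unfolding hecke_char_m2_def by blast
  have c2: "\<And>a. frac_ideal K a \<Longrightarrow> chi2 a \<noteq> 0" using assms(8) unfolding hecke_char_m2_def by blast
  have m1: "\<And>a b. frac_ideal K a \<Longrightarrow> frac_ideal K b \<Longrightarrow> chi (ideal_mult K a b) = chi a * chi b"
    using assms(7) unfolding hecke_char_m2_def by blast
  have m2: "\<And>a b. frac_ideal K a \<Longrightarrow> frac_ideal K b \<Longrightarrow> chi2 (ideal_mult K a b) = chi2 a * chi2 b"
    using assms(8) unfolding hecke_char_m2_def by blast
  have pw: "(X a / Y a) ^ h = 1"
    if a: "frac_ideal K a" and XY: "(X = chi \<and> Y = chi2) \<or> (X = chi2 \<and> Y = chi)" for X Y a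
  proof -
    have hX: "hecke_char_m2 K X" "hecke_char_m2 K Y" using XY assms(7,8) by auto
    have nX: "\<And>a. frac_ideal K a \<Longrightarrow> X a \<noteq> 0" "\<And>a. frac_ideal K a \<Longrightarrow> Y a \<noteq> 0"
      using hX unfolding hecke_char_m2_def by blast+
    have mX: "\<And>a b. frac_ideal K a \<Longrightarrow> frac_ideal K b \<Longrightarrow> X (ideal_mult K a b) = X a * X b"
      "\<And>a b. frac_ideal K a \<Longrightarrow> frac_ideal K b \<Longrightarrow> Y (ideal_mult K a b) = Y a * Y b"
      using hX unfolding hecke_char_m2_def by blast+
    show ?thesis unfolding h_def class_number_def
    proof (rule psi_pow[OF fin _ _ _ a])
      fix a b assume "frac_ideal K a" "frac_ideal K b"
      then show "X (ideal_mult K a b) / Y (ideal_mult K a b) = X a / Y a * (X b / Y b)"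
        using mX by simp
    next
      fix a b assume fa: "frac_ideal K a" and fb: "frac_ideal K b" and e: "ideal_equiv K a b"
      obtain \<alpha> where al: "\<alpha> \<in> K" "\<alpha> \<noteq> 0" "b = (\<lambda>x. \<alpha> * x) ` a" using e by (rule equivE)
      have "X b = inverse (\<alpha> ^ 2) * X a" unfolding al(3) by (rule chi_scale[OF hX(1) fa al(1,2)])
      moreover have "Y b = inverse (\<alpha> ^ 2) * Y a" unfolding al(3) by (rule chi_scale[OF hX(2) fa al(1,2)])
      ultimately show "X b / Y b = X a / Y a" using al(2) by simp
    next
      fix a assume "frac_ideal K a"
      then show "X a / Y a \<noteq> 0" using nX by simp
    qed
  qed
  have rat: "X a / Y a \<in> F \<and> alg_int (X a / Y a)"
    if a: "frac_ideal K a" and XY: "(X = chi \<and> Y = chi2) \<or> (X = chi2 \<and> Y = chi)" for X Y a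
  proof
    have p: "(X a / Y a) ^ h = 1" by (rule pw[OF a XY])
    then show "X a / Y a \<in> F" using assms(6) unfolding h_def by blast
    show "alg_int (X a / Y a)" by (rule alg_int_root_unity[OF p h1])
  qed
  show ?thesis
  proof (rule equalityI)
    show "L_Eis K F chi \<subseteq> L_Eis K F chi2"
    proof (rule L_Eis_sub[OF sF c1 c2])
      fix a assume "frac_ideal K a"
      then show "chi2 a / chi a \<in> F \<and> alg_int (chi2 a / chi a)" by (rule rat) simp
    qed
    show "L_Eis K F chi2 \<subseteq> L_Eis K F chi"
    proof (rule L_Eis_sub[OF sF c2 c1])
      fix a assume "frac_ideal K a"
      then show "chi a / chi2 a \<in> F \<and> alg_int (chi a / chi2 a)" by (rule rat) simp
    qed
  qed
qed

end
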